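(* Let $(q_n),(r_n)$ be complex sequences vanishing faster than any negative power of $|n|$ as $n\to\pm\infty$ with $1-q_nr_n\neq0$ and $1+q_nr_{n+1}\ne0$ for all $n$, and let $\begin{bmatrix}\bar M_{nm}&M_{nm}\end{bmatrix}$ be as in the context. Writing $[\mathbf v]_1,[\mathbf v]_2$ for the components of a column vector $\mathbf v$, $$q_n=\frac{\sum_{l=n}^\infty[M_{nl}]_1\sum_{k=n}^\infty[M_{nk}]_2}{\sum_{l=n}^\infty[\bar M_{nl}]_1\sum_{k=n}^\infty[M_{nk}]_2-\sum_{l=n}^\infty[M_{nl}]_1\sum_{k=n}^\infty[\bar M_{nk}]_2},$$ $$r_n=\frac{\sum_{l=n-1}^\infty[\bar M_{(n-1)l}]_2}{\sum_{l=n-1}^\infty[M_{(n-1)l}]_2}-\frac{\sum_{l=n}^\infty[\bar M_{nl}]_2}{\sum_{l=n}^\infty[M_{nl}]_2}.$$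
   Context: System (Q): $\begin{bmatrix}\alpha_n\\ \beta_n\end{bmatrix}=\begin{bmatrix} z & (z-z^{-1})q_n\\ z r_n & z^{-1}+(z-z^{-1})q_nr_n\end{bmatrix}\begin{bmatrix}\alpha_{n+1}\\ \beta_{n+1}\end{bmatrix}$, $n\in\mathbb Z$. For $|z|=1$ let $\psi_n$, $\bar\psi_n$ (overbar not complex conjugation) be the solutions with $\psi_n=\begin{bmatrix}o(1)\\ z^n[1+o(1)]\end{bmatrix}$ and $\bar\psi_n=\begin{bmatrix}z^{-n}[1+o(1)]\\ o(1)\end{bmatrix}$ as $n\to+\infty$. Let $K_{nm}:=\frac1{2\pi i}\oint\psi_n z^{-m-1}dz$, $\bar K_{nm}:=\frac1{2\pi i}\oint\bar\psi_n z^{m-1}dz$ (integrals counterclockwise over the unit circle; these are column vectors with $\psi_n=\sum_{l\ge n}K_{nl}z^l$, $\bar\psi_n=\sum_{l\ge n}\bar K_{nl}z^{-l}$). The $2\times2$ matrix $\begin{bmatrix}\bar K_{nn}&K_{nn}\end{bmatrix}$ is invertible and $\begin{bmatrix}\bar M_{nm}&M_{nm}\end{bmatrix}:=\begin{bmatrix}\bar K_{nn}&K_{nn}\end{bmatrix}^{-1}\begin{bmatrix}\bar K_{nm}&K_{nm}\end{bmatrix}$ for $m\ge n$. (These $M,\bar M$ are the solution of the discrete Marchenko system of (Q).) *)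

theory Defs
  imports "HOL-Complex_Analysis.Complex_Analysis"
begin

text \<open>Column vectors in C^2 are represented as pairs; [v]_1 = fst v, [v]_2 = snd v.\<close>

definition Q_step ::
  "(int \<Rightarrow> complex) \<Rightarrow> (int \<Rightarrow> complex) \<Rightarrow> int \<Rightarrow> complex \<Rightarrow> complex \<times> complex \<Rightarrow> complex \<times> complex"
  where "Q_step q r n z v =
    (z * fst v + (z - inverse z) * q n * snd v,
     z * r n * fst v + (inverse z + (z - inverse z) * q n * r n) * snd v)"

definition solves_Q ::
  "(int \<Rightarrow> complex) \<Rightarrow> (int \<Rightarrow> complex) \<Rightarrow> complex \<Rightarrow> (int \<Rightarrow> complex \<times> complex) \<Rightarrow> bool"
  where "solves_Q q r z \<phi> \<longleftrightarrow> (\<forall>n. \<phi> n = Q_step q r n z (\<phi> (n + 1)))"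

definition rapidly_decreasing :: "(int \<Rightarrow> complex) \<Rightarrow> bool"
  where "rapidly_decreasing x \<longleftrightarrow>
    (\<forall>k::nat. ((\<lambda>n. of_int \<bar>n\<bar> ^ k * x n) \<longlongrightarrow> 0) at_top \<and>
              ((\<lambda>n. of_int \<bar>n\<bar> ^ k * x n) \<longlongrightarrow> 0) at_bot)"

definition jost_psi_asym :: "complex \<Rightarrow> (int \<Rightarrow> complex \<times> complex) \<Rightarrow> bool"
  where "jost_psi_asym z \<phi> \<longleftrightarrow>
    ((\<lambda>n. fst (\<phi> n)) \<longlongrightarrow> 0) at_top \<and>
    ((\<lambda>n. snd (\<phi> n) / z powi n) \<longlongrightarrow> 1) at_top"

definition jost_psibar_asym :: "complex \<Rightarrow> (int \<Rightarrow> complex \<times> complex) \<Rightarrow> bool"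
  where "jost_psibar_asym z \<phi> \<longleftrightarrow>
    ((\<lambda>n. fst (\<phi> n) / z powi (- n)) \<longlongrightarrow> 1) at_top \<and>
    ((\<lambda>n. snd (\<phi> n)) \<longlongrightarrow> 0) at_top"

definition circ_coeff :: "(complex \<Rightarrow> complex \<times> complex) \<Rightarrow> complex \<times> complex"
  where "circ_coeff f =
    (contour_integral (circlepath 0 1) (\<lambda>z. fst (f z)) / (2 * pi * \<i>),
     contour_integral (circlepath 0 1) (\<lambda>z. snd (f z)) / (2 * pi * \<i>))"

definition Kker :: "(int \<Rightarrow> complex \<Rightarrow> complex \<times> complex) \<Rightarrow> int \<Rightarrow> int \<Rightarrow> complex \<times> complex"
  where "Kker \<psi> n m = circ_coeff (\<lambda>z. (fst (\<psi> n z) * z powi (- m - 1), snd (\<psi> n z) * z powi (- m - 1)))"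

definition Kbker :: "(int \<Rightarrow> complex \<Rightarrow> complex \<times> complex) \<Rightarrow> int \<Rightarrow> int \<Rightarrow> complex \<times> complex"
  where "Kbker \<psi>b n m = circ_coeff (\<lambda>z. (fst (\<psi>b n z) * z powi (m - 1), snd (\<psi>b n z) * z powi (m - 1)))"

definition solve2 :: "complex \<times> complex \<Rightarrow> complex \<times> complex \<Rightarrow> complex \<times> complex \<Rightarrow> complex \<times> complex"
  where "solve2 a b v =
    (let d = fst a * snd b - snd a * fst b
     in ((snd b * fst v - fst b * snd v) / d, (fst a * snd v - snd a * fst v) / d))"

text \<open>[Mbar_nm M_nm] = [Kbar_nn K_nn]^{-1} [Kbar_nm K_nm]\<close>
definition Mker :: "(int \<Rightarrow> complex \<Rightarrow> complex \<times> complex) \<Rightarrow> (int \<Rightarrow> complex \<Rightarrow> complex \<times> complex) \<Rightarrow> int \<Rightarrow> int \<Rightarrow> complex \<times> complex"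
  where "Mker \<psi> \<psi>b n m = solve2 (Kbker \<psi>b n n) (Kker \<psi> n n) (Kker \<psi> n m)"

definition Mbker :: "(int \<Rightarrow> complex \<Rightarrow> complex \<times> complex) \<Rightarrow> (int \<Rightarrow> complex \<Rightarrow> complex \<times> complex) \<Rightarrow> int \<Rightarrow> int \<Rightarrow> complex \<times> complex"
  where "Mbker \<psi> \<psi>b n m = solve2 (Kbker \<psi>b n n) (Kker \<psi> n n) (Kbker \<psi>b n m)"

definition tailsum :: "(int \<Rightarrow> complex) \<Rightarrow> int \<Rightarrow> complex"
  where "tailsum x n = (\<Sum>j. x (n + int j))"

end

theory Submission
  imports Defs
begin


lemma circ_powi:
  "((\<lambda>z::complex. z powi p) has_contour_integral (if p = -1 then 2*pi*\<i> else 0)) (circlepath 0 1)"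
proof (cases "p = -1")
  case True
  have "((\<lambda>u. 1/(u-0)) has_contour_integral (2 * of_real pi * \<i> * 1)) (circlepath 0 1)"
    using Cauchy_integral_circlepath_simple[of "\<lambda>_. 1" 0 1 0] by simp
  moreover have "\<And>u::complex. 1/(u-0) = u powi p" using True by (simp add: power_int_minus divide_inverse)
  ultimately show ?thesis using True by simp
next
  case False
  have "((\<lambda>z::complex. z powi p) has_contour_integral 0) (circlepath 0 1)"
  proof (rule Cauchy_theorem_primitive[where S="-{0}" and f="\<lambda>z. z powi (p+1) / of_int (p+1)"])
    fix x :: complex assume "x \<in> -{0}"
    then have x: "x \<noteq> 0" by auto
    have "p + 1 \<noteq> 0" using False by auto
    then have "complex_of_int p + 1 \<noteq> 0" by (metis of_int_1 of_int_add of_int_eq_0_iff)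
    then show "((\<lambda>z. z powi (p+1) / of_int (p+1)) has_field_derivative x powi p) (at x within -{0})"
      using x by (auto intro!: derivative_eq_intros)
  qed (auto simp: path_image_circlepath)
  then show ?thesis using False by simp
qed


definition tt :: "int \<Rightarrow> real" where "tt m = real_of_int m / (real_of_int \<bar>m\<bar> + 1)"
definition gg :: "int \<Rightarrow> real" where "gg m = tt (m + 1) - tt m"

lemma aux_frac: "(0::real) < P \<Longrightarrow> P \<le> 3 * (1 + x^2) \<Longrightarrow> 1 / (1 + x^2) \<le> 3 * (1 / P)"
proof -
  assume P: "0 < P" "P \<le> 3 * (1 + x^2)"
  have pos: "1 + x^2 > 0" by (simp add: add_pos_nonneg)
  have "1 / (1 + x^2) = 3 / (3 * (1 + x^2))" using pos by (simp add: field_simps)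
  also have "\<dots> \<le> 3 / P" by (rule frac_le) (use P in auto)
  finally show ?thesis by simp
qed

lemma gg_lb: "1 / (1 + (real_of_int m)^2) \<le> 3 * gg m"
proof (cases "m \<ge> 0")
  case True
  then have a: "\<bar>m\<bar> = m" "\<bar>m+1\<bar> = m + 1" by auto
  have g: "gg m = 1 / ((real_of_int m + 1) * (real_of_int m + 2))"
    unfolding gg_def tt_def using True by (simp add: a field_simps)
  have "(real_of_int m + 1) * (real_of_int m + 2) \<le> 3 * (1 + (real_of_int m)^2)"
  proof -
    have "(2 * real_of_int m - 1) * (real_of_int m - 1) \<ge> 0"
    proof (cases "m = 0")
      case False then have "m \<ge> 1" using True by auto
      then show ?thesis by (intro mult_nonneg_nonneg) auto
    qed simp
    then show ?thesis by (simp add: algebra_simps power2_eq_square)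
  qed
  moreover have "0 < (real_of_int m + 1) * (real_of_int m + 2)" using True by simp
  ultimately show ?thesis unfolding g by (rule aux_frac[rotated])
next
  case False
  define p where "p = - m"
  have p: "p \<ge> 1" using False p_def by auto
  have a: "\<bar>m\<bar> = p" "\<bar>m+1\<bar> = p - 1" using p p_def by auto
  have g: "gg m = 1 / (real_of_int p * (real_of_int p + 1))"
    unfolding gg_def tt_def using p by (simp add: a p_def[symmetric] field_simps) (simp add: p_def algebra_simps)
  have "real_of_int p * (real_of_int p + 1) \<le> 3 * (1 + (real_of_int m)^2)"
  proof -
    have "real_of_int m * (2*real_of_int m + 1) \<ge> 0" using p p_def by (intro mult_nonpos_nonpos) auto
    then show ?thesis by (simp add: p_def algebra_simps power2_eq_square)
  qed
  moreover have "0 < real_of_int p * (real_of_int p + 1)" using p by simp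
  ultimately show ?thesis unfolding g by (rule aux_frac[rotated])
qed


lemma gg_nonneg: "gg m \<ge> 0"
proof -
  have "0 < 1 + (real_of_int m)^2" by (simp add: add_pos_nonneg)
  then have "0 < 1 / (1 + (real_of_int m)^2)" by simp
  then show ?thesis using gg_lb[of m] by linarith
qed

lemma tt_bound: "\<bar>tt m\<bar> < 1"
proof -
  have p: "real_of_int \<bar>m\<bar> + 1 > 0" by simp
  have "\<bar>tt m\<bar> = \<bar>real_of_int m\<bar> / (real_of_int \<bar>m\<bar> + 1)"
    by (simp only: tt_def abs_divide abs_of_pos[OF p])
  also have "\<dots> < 1" using p by (simp only: of_int_abs[symmetric] divide_less_eq_1_pos)
  finally show ?thesis .
qed

lemma gg_tele: "(\<Sum>i<j. gg (n + int i)) = tt (n + int j) - tt n"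
proof (induction j)
  case (Suc j)
  have "n + int (Suc j) = (n + int j) + 1" by simp
  then show ?case using Suc by (simp add: gg_def ac_simps)
qed simp

lemma tt_tail: "m \<ge> 0 \<Longrightarrow> 1 - tt m = 1 / (real_of_int m + 1)"
proof -
  assume m: "m \<ge> 0"
  have p: "real_of_int m + 1 > 0" using m by simp
  have "tt m = real_of_int m / (real_of_int m + 1)" unfolding tt_def using m by simp
  then show ?thesis using p by (simp add: field_simps)
qed


lemma bounded_int_seq:
  fixes f :: "int \<Rightarrow> complex"
  assumes "(f \<longlongrightarrow> 0) at_top" "(f \<longlongrightarrow> 0) at_bot"
  shows "\<exists>C. \<forall>m. cmod (f m) \<le> C"
proof -
  have "eventually (\<lambda>m. cmod (f m) < 1) at_top"
    using tendstoD[OF assms(1), of 1] by (simp add: dist_norm)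
  then obtain N1 where N1: "\<And>m. m \<ge> N1 \<Longrightarrow> cmod (f m) < 1"
    by (auto simp: eventually_at_top_linorder)
  have "eventually (\<lambda>m. cmod (f m) < 1) at_bot"
    using tendstoD[OF assms(2), of 1] by (simp add: dist_norm)
  then obtain N2 where N2: "\<And>m. m \<le> N2 \<Longrightarrow> cmod (f m) < 1"
    by (auto simp: eventually_at_bot_linorder)
  define C where "C = 1 + (\<Sum>m\<in>{N2..N1}. cmod (f m))"
  have "cmod (f m) \<le> C" for m
  proof (cases "m \<ge> N1 \<or> m \<le> N2")
    case True
    have "0 \<le> (\<Sum>m\<in>{N2..N1}. cmod (f m))" by (simp add: sum_nonneg)
    then show ?thesis using True N1 N2 C_def by force
  next
    case False
    then have "m \<in> {N2..N1}" by auto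
    then have "cmod (f m) \<le> (\<Sum>m\<in>{N2..N1}. cmod (f m))"
      by (intro member_le_sum) auto
    then show ?thesis unfolding C_def by linarith
  qed
  then show ?thesis by blast
qed

lemma rd_bound:
  assumes "rapidly_decreasing q"
  shows "\<exists>C. \<forall>m. (1 + (real_of_int m)^2) * cmod (q m) \<le> C"
proof -
  have h0: "((\<lambda>n. of_int \<bar>n\<bar> ^ 0 * q n) \<longlongrightarrow> 0) at_top" "((\<lambda>n. of_int \<bar>n\<bar> ^ 0 * q n) \<longlongrightarrow> 0) at_bot"
   and h2: "((\<lambda>n. of_int \<bar>n\<bar> ^ 2 * q n) \<longlongrightarrow> 0) at_top" "((\<lambda>n. of_int \<bar>n\<bar> ^ 2 * q n) \<longlongrightarrow> 0) at_bot"
    using assms unfolding rapidly_decreasing_def by blast+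
  let ?f = "\<lambda>n. (1 + of_int \<bar>n\<bar> ^ 2) * q n"
  have e: "?f = (\<lambda>n. of_int \<bar>n\<bar> ^ 0 * q n + of_int \<bar>n\<bar> ^ 2 * q n)"
    by (auto simp: algebra_simps)
  have "(?f \<longlongrightarrow> 0) at_top" "(?f \<longlongrightarrow> 0) at_bot"
    unfolding e using tendsto_add[OF h0(1) h2(1)] tendsto_add[OF h0(2) h2(2)] by simp_all
  then obtain C where C: "\<And>m. cmod (?f m) \<le> C" using bounded_int_seq by blast
  have "cmod (?f m) = (1 + (real_of_int m)^2) * cmod (q m)" for m
  proof -
    have "cmod (1 + of_int \<bar>m\<bar> ^ 2 :: complex) = 1 + (real_of_int m)^2"
    proof -
      have "(of_int \<bar>m\<bar> ^ 2 :: complex) = of_int (m ^ 2)" by (metis of_int_power power2_abs)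
      then have "(1 + of_int \<bar>m\<bar> ^ 2 :: complex) = of_real (1 + (real_of_int m)^2)" by simp
      then show ?thesis by (simp only: norm_of_real) (simp add: add_pos_nonneg)
    qed
    then show ?thesis by (simp add: norm_mult)
  qed
  then show ?thesis using C by metis
qed


type_synonym cseq = "nat \<Rightarrow> complex \<times> complex"

definition nrm :: "complex \<times> complex \<Rightarrow> real" where "nrm v = cmod (fst v) + cmod (snd v)"
definition LK :: "nat \<Rightarrow> cseq \<Rightarrow> real" where "LK K x = (\<Sum>k<K. nrm (x k))"

lemma nrm_nonneg: "nrm v \<ge> 0" by (simp add: nrm_def)

lemma nrm_add: "nrm (a + b) \<le> nrm a + nrm b"
  unfolding nrm_def using norm_triangle_ineq[of "fst a" "fst b"] norm_triangle_ineq[of "snd a" "snd b"] by simp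

lemma nrm_minus_commute: "nrm (a - b) = nrm (b - a)"
  unfolding nrm_def by (simp add: norm_minus_commute)

lemma nrm_zero_iff: "nrm v = 0 \<longleftrightarrow> v = 0"
  unfolding nrm_def by (cases v) (auto simp: add_nonneg_eq_0_iff zero_prod_def)

lemma norm_le_nrm: "norm v \<le> nrm v"
proof -
  have "norm v = sqrt ((cmod (fst v))\<^sup>2 + (cmod (snd v))\<^sup>2)"
    by (cases v) (simp add: norm_Pair)
  also have "\<dots> \<le> \<bar>cmod (fst v)\<bar> + \<bar>cmod (snd v)\<bar>" by (rule sqrt_sum_squares_le_sum_abs)
  finally show ?thesis by (simp add: nrm_def)
qed

lemma LK_nonneg: "LK K x \<ge> 0" unfolding LK_def by (simp add: sum_nonneg nrm_nonneg)

lemma nrm_le_LK: "k < K \<Longrightarrow> nrm (x k) \<le> LK K x"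
  unfolding LK_def by (rule member_le_sum) (auto simp: nrm_nonneg)

lemma LK_add: "LK K (\<lambda>k. x k + y k) \<le> LK K x + LK K y"
  unfolding LK_def sum.distrib[symmetric] by (rule sum_mono) (rule nrm_add)

lemma LK_minus_commute: "LK K (\<lambda>k. x k - y k) = LK K (\<lambda>k. y k - x k)"
  unfolding LK_def by (simp add: nrm_minus_commute)

lemma LK_zero: "LK K (\<lambda>k. 0) = 0" unfolding LK_def by (simp add: nrm_def)

lemma LK_tendsto:
  assumes "\<And>k. (\<lambda>m. X m k) \<longlonglongrightarrow> x k"
  shows "(\<lambda>m. LK K (X m)) \<longlonglongrightarrow> LK K x"
  unfolding LK_def nrm_def
  by (intro tendsto_sum tendsto_add tendsto_norm tendsto_fst tendsto_snd assms)

primrec Gi :: "(int \<Rightarrow> cseq \<Rightarrow> cseq) \<Rightarrow> cseq \<Rightarrow> nat \<Rightarrow> int \<Rightarrow> cseq" where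
  "Gi T u 0 n = u" | "Gi T u (Suc j) n = T n (Gi T u j (n + 1))"

locale volt =
  fixes T :: "int \<Rightarrow> cseq \<Rightarrow> cseq" and u :: cseq and e :: "int \<Rightarrow> real" and B :: real
  assumes lin: "\<And>n x y. T n (\<lambda>k. x k - y k) = (\<lambda>k. T n x k - T n y k)"
    and bnd: "\<And>n K x. LK K (T n x) \<le> (1 + e n) * LK K x"
    and st: "\<And>n K. LK K (\<lambda>k. T n u k - u k) \<le> e n"
    and epos: "\<And>n. e n \<ge> 0"
    and pb: "\<And>n j. (\<Prod>i<j. 1 + e (n + int i)) \<le> B"
    and esum: "\<And>n. summable (\<lambda>i. e (n + int i))"
begin

abbreviation G where "G \<equiv> Gi T u"
definition D :: "nat \<Rightarrow> int \<Rightarrow> cseq" where "D j n = (\<lambda>k. G (Suc j) n k - G j n k)"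

lemma D_Suc: "D (Suc j) n = T n (D j (n + 1))"
  unfolding D_def by (simp add: lin)

lemma B_ge1: "B \<ge> 1" using pb[of _ 0] by simp

lemma D_bnd0: "LK K (D j n) \<le> (\<Prod>i<j. 1 + e (n + int i)) * e (n + int j)"
proof (induction j arbitrary: n)
  case 0 then show ?case using st by (simp add: D_def)
next
  case (Suc j)
  have "LK K (D (Suc j) n) \<le> (1 + e n) * LK K (D j (n+1))" unfolding D_Suc by (rule bnd)
  also have "\<dots> \<le> (1 + e n) * ((\<Prod>i<j. 1 + e (n + 1 + int i)) * e (n + 1 + int j))"
    using Suc[of "n+1"] epos[of n] by (intro mult_left_mono) auto
  also have "\<dots> = (\<Prod>i<Suc j. 1 + e (n + int i)) * e (n + int (Suc j))"
    by (simp del: prod.lessThan_Suc add: prod.lessThan_Suc_shift ac_simps)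
  finally show ?case .
qed

lemma D_bnd: "LK K (D j n) \<le> B * e (n + int j)"
proof -
  have "LK K (D j n) \<le> (\<Prod>i<j. 1 + e (n + int i)) * e (n + int j)" by (rule D_bnd0)
  also have "\<dots> \<le> B * e (n + int j)" using pb epos by (intro mult_right_mono) auto
  finally show ?thesis .
qed

lemma G_sum: "G j n k = u k + (\<Sum>i<j. D i n k)"
  by (induction j) (auto simp: D_def)

lemma D_summable: "summable (\<lambda>i. D i n k)"
proof (rule summable_comparison_test)
  show "summable (\<lambda>i. B * e (n + int i))" using esum by (rule summable_mult)
  have "norm (D i n k) \<le> B * e (n + int i)" for i
    using norm_le_nrm[of "D i n k"] nrm_le_LK[of k "Suc k" "D i n"] D_bnd[of "Suc k" i n] by linarith
  then show "\<exists>N. \<forall>i\<ge>N. norm (D i n k) \<le> B * e (n + int i)" by blast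
qed

definition c :: "int \<Rightarrow> cseq" where "c n k = u k + (\<Sum>i. D i n k)"

lemma G_lim: "(\<lambda>j. G j n k) \<longlonglongrightarrow> c n k"
  unfolding G_sum c_def by (intro tendsto_add tendsto_const summable_LIMSEQ D_summable)

definition tl :: "int \<Rightarrow> nat \<Rightarrow> real" where "tl n j = (\<Sum>i. e (n + int j + int i))"

lemma tl_nonneg: "tl n j \<ge> 0"
  unfolding tl_def by (intro suminf_nonneg esum epos)

lemma tl_lim: "(\<lambda>j. tl n j) \<longlonglongrightarrow> 0"
proof (rule LIMSEQ_I)
  fix r :: real assume r: "r > 0"
  define f where "f i = e (n + int i)" for i
  have "summable f" unfolding f_def by (rule esum)
  from suminf_exist_split[OF r this] obtain N where N: "\<And>j. j \<ge> N \<Longrightarrow> norm (\<Sum>i. f (i + j)) < r" by blast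
  have "tl n j = (\<Sum>i. f (i + j))" for j unfolding tl_def f_def by (simp add: ac_simps)
  then show "\<exists>N. \<forall>j\<ge>N. norm (tl n j - 0) < r" using N by auto
qed

lemma sum_le_tl: "(\<Sum>i\<in>{j..<m}. e (n + int i)) \<le> tl n j"
proof (cases "j \<le> m")
  case True
  have "(\<Sum>i\<in>{j..<m}. e (n + int i)) = (\<Sum>i\<in>{0+j..<(m-j)+j}. e (n + int i))" using True by simp
  also have "\<dots> = (\<Sum>i\<in>{0..<m-j}. e (n + int j + int i))"
    by (subst sum.shift_bounds_nat_ivl) (simp add: ac_simps)
  also have "\<dots> \<le> tl n j" unfolding tl_def
    by (intro sum_le_suminf esum) (auto simp: epos)
  finally show ?thesis .
next
  case False then show ?thesis using tl_nonneg by simp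
qed

lemma partial_bnd: "j \<le> m \<Longrightarrow> LK K (\<lambda>k. G m n k - G j n k) \<le> B * (\<Sum>i\<in>{j..<m}. e (n + int i))"
proof (induction m)
  case 0 then show ?case by (simp add: LK_zero)
next
  case (Suc m)
  show ?case
  proof (cases "j = Suc m")
    case True then show ?thesis by (simp add: LK_zero)
  next
    case False
    then have jm: "j \<le> m" using Suc.prems by simp
    have eq: "(\<lambda>k. G (Suc m) n k - G j n k) = (\<lambda>k. D m n k + (G m n k - G j n k))"
      by (simp add: D_def del: Gi.simps)
    have "LK K (\<lambda>k. G (Suc m) n k - G j n k) \<le> LK K (D m n) + LK K (\<lambda>k. G m n k - G j n k)"
      unfolding eq using LK_add[of K "D m n" "\<lambda>k. G m n k - G j n k"] by simp
    also have "\<dots> \<le> B * e (n + int m) + B * (\<Sum>i\<in>{j..<m}. e (n + int i))"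
      using D_bnd Suc.IH[OF jm] by (intro add_mono) auto
    also have "\<dots> = B * (\<Sum>i\<in>{j..<Suc m}. e (n + int i))"
      using jm by (simp add: algebra_simps)
    finally show ?thesis .
  qed
qed

lemma c_G: "LK K (\<lambda>k. c n k - G j n k) \<le> B * tl n j"
proof (rule LIMSEQ_le_const2)
  show "(\<lambda>m. LK K (\<lambda>k. G m n k - G j n k)) \<longlonglongrightarrow> LK K (\<lambda>k. c n k - G j n k)"
    by (intro LK_tendsto tendsto_diff G_lim tendsto_const)
  have "LK K (\<lambda>k. G m n k - G j n k) \<le> B * tl n j" if "m \<ge> j" for m
  proof -
    have "LK K (\<lambda>k. G m n k - G j n k) \<le> B * (\<Sum>i\<in>{j..<m}. e (n + int i))" using partial_bnd that .
    also have "\<dots> \<le> B * tl n j" using sum_le_tl B_ge1 by (intro mult_left_mono) auto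
    finally show ?thesis .
  qed
  then show "\<exists>N. \<forall>m\<ge>N. LK K (\<lambda>k. G m n k - G j n k) \<le> B * tl n j" by blast
qed

lemma c_fix: "c n = T n (c (n + 1))"
proof
  fix k
  let ?d = "\<lambda>k. c n k - T n (c (n + 1)) k"
  have bnd_j: "LK (Suc k) ?d \<le> B * tl n (Suc j) + (1 + e n) * (B * tl (n+1) j)" for j
  proof -
    have eq: "?d = (\<lambda>k. (c n k - G (Suc j) n k) + T n (\<lambda>k. G j (n+1) k - c (n+1) k) k)"
      by (simp add: lin)
    have "LK (Suc k) ?d \<le> LK (Suc k) (\<lambda>k. c n k - G (Suc j) n k) + LK (Suc k) (T n (\<lambda>k. G j (n+1) k - c (n+1) k))"
      unfolding eq by (rule LK_add)
    also have "\<dots> \<le> B * tl n (Suc j) + (1 + e n) * LK (Suc k) (\<lambda>k. G j (n+1) k - c (n+1) k)"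
      by (intro add_mono c_G bnd)
    also have "LK (Suc k) (\<lambda>k. G j (n+1) k - c (n+1) k) = LK (Suc k) (\<lambda>k. c (n+1) k - G j (n+1) k)"
      by (rule LK_minus_commute)
    also have "(1 + e n) * \<dots> \<le> (1 + e n) * (B * tl (n+1) j)"
      using epos[of n] by (intro mult_left_mono c_G) auto
    finally show ?thesis by simp
  qed
  have tl_eq: "tl (n+1) j = tl n (Suc j)" for j unfolding tl_def by (simp add: ac_simps)
  have lim: "(\<lambda>j. B * tl n (Suc j) + (1 + e n) * (B * tl (n+1) j)) \<longlonglongrightarrow> B * 0 + (1 + e n) * (B * 0)"
    by (intro tendsto_add tendsto_mult tendsto_const tl_lim LIMSEQ_Suc)
  have "LK (Suc k) ?d \<le> 0"
    using LIMSEQ_le_const[OF lim, of "LK (Suc k) ?d"] bnd_j by auto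
  then have "nrm (?d k) \<le> 0" using nrm_le_LK[of k "Suc k" ?d] by simp
  then have "?d k = 0" using nrm_nonneg[of "?d k"] nrm_zero_iff by (metis order_antisym)
  then show "c n k = T n (c (n + 1)) k" by simp
qed

lemma c_u: "LK K (\<lambda>k. c n k - u k) \<le> B * tl n 0"
  using c_G[of K n 0] by simp

lemma c_u_summable: "summable (\<lambda>k. nrm (c n k - u k))"
  by (rule summableI_nonneg_bounded[where x="B * tl n 0"]) (use c_u nrm_nonneg in \<open>auto simp: LK_def\<close>)

lemma c_u_suminf: "(\<Sum>k. nrm (c n k - u k)) \<le> B * tl n 0"
  by (rule suminf_le_const[OF c_u_summable]) (use c_u in \<open>auto simp: LK_def\<close>)

end


definition sh :: "(nat \<Rightarrow> complex) \<Rightarrow> nat \<Rightarrow> complex" where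
  "sh a k = (if k = 0 then 0 else a (k - 1))"

definition StepA :: "(int \<Rightarrow> complex) \<Rightarrow> (int \<Rightarrow> complex) \<Rightarrow> int \<Rightarrow> cseq \<Rightarrow> cseq" where
  "StepA q r n x = (\<lambda>k. (sh (\<lambda>k. fst (x k)) k + q n * (sh (\<lambda>k. snd (x k)) k - snd (x k)),
      r n * sh (\<lambda>k. fst (x k)) k + snd (x k) + q n * r n * (sh (\<lambda>k. snd (x k)) k - snd (x k))))"

definition StepB :: "(int \<Rightarrow> complex) \<Rightarrow> (int \<Rightarrow> complex) \<Rightarrow> int \<Rightarrow> cseq \<Rightarrow> cseq" where
  "StepB q r n x = (\<lambda>k. (fst (x k) + q n * (snd (x k) - sh (\<lambda>k. snd (x k)) k),
      r n * fst (x k) + sh (\<lambda>k. snd (x k)) k + q n * r n * (snd (x k) - sh (\<lambda>k. snd (x k)) k)))"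

definition ee :: "(int \<Rightarrow> complex) \<Rightarrow> (int \<Rightarrow> complex) \<Rightarrow> int \<Rightarrow> real" where
  "ee q r n = 2 * cmod (q n) + cmod (r n) + 2 * cmod (q n) * cmod (r n)"

definition e1s :: cseq where "e1s = (\<lambda>k. if k = 0 then (1, 0) else (0, 0))"
definition e2s :: cseq where "e2s = (\<lambda>k. if k = 0 then (0, 1) else (0, 0))"

lemma ee_nonneg: "ee q r n \<ge> 0" unfolding ee_def by simp

lemma sh_sum_le: "(\<Sum>k<K. cmod (sh a k)) \<le> (\<Sum>k<K. cmod (a k))"
proof (cases K)
  case (Suc K')
  have "(\<Sum>k<Suc K'. cmod (sh a k)) = (\<Sum>k<K'. cmod (a k))"
    by (subst sum.lessThan_Suc_shift) (simp add: sh_def)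
  also have "\<dots> \<le> (\<Sum>k<Suc K'. cmod (a k))" by (intro sum_mono2) auto
  finally show ?thesis using Suc by simp
qed simp

lemma StepA_lin: "StepA q r n (\<lambda>k. x k - y k) = (\<lambda>k. StepA q r n x k - StepA q r n y k)"
  by (auto simp: StepA_def sh_def algebra_simps fun_eq_iff)

lemma StepB_lin: "StepB q r n (\<lambda>k. x k - y k) = (\<lambda>k. StepB q r n x k - StepB q r n y k)"
  by (auto simp: StepB_def sh_def algebra_simps fun_eq_iff)

lemma cm1: "cmod (sa + q * (sb - b)) \<le> cmod sa + cmod q * (cmod sb + cmod b)"
proof -
  have "cmod (sa + q * (sb - b)) \<le> cmod sa + cmod (q * (sb - b))" by (rule norm_triangle_ineq)
  also have "cmod (q * (sb - b)) = cmod q * cmod (sb - b)" by (simp add: norm_mult)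
  also have "\<dots> \<le> cmod q * (cmod sb + cmod b)" by (intro mult_left_mono norm_triangle_ineq4) auto
  finally show ?thesis by simp
qed

lemma cm2: "cmod (r * sa + b + q * r * (sb - b)) \<le> cmod r * cmod sa + cmod b + cmod q * cmod r * (cmod sb + cmod b)"
proof -
  have "cmod (r * sa + b + q * r * (sb - b)) \<le> cmod (r * sa) + cmod b + cmod (q * r * (sb - b))"
    by (rule order_trans[OF norm_triangle_ineq add_right_mono[OF norm_triangle_ineq]])
  also have "cmod (q * r * (sb - b)) = cmod q * cmod r * cmod (sb - b)" by (simp add: norm_mult)
  also have "\<dots> \<le> cmod q * cmod r * (cmod sb + cmod b)" by (intro mult_left_mono norm_triangle_ineq4) auto
  finally show ?thesis by (simp add: norm_mult)
qed

lemma cm3: "cmod (a + q * (b - sb)) \<le> cmod a + cmod q * (cmod b + cmod sb)"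
  using cm1[of a q b sb] by simp

lemma cm4: "cmod (r * a + sb + q * r * (b - sb)) \<le> cmod r * cmod a + cmod sb + cmod q * cmod r * (cmod b + cmod sb)"
proof -
  have "cmod (r * a + sb + q * r * (b - sb)) \<le> cmod (r * a) + cmod sb + cmod (q * r * (b - sb))"
    by (rule order_trans[OF norm_triangle_ineq add_right_mono[OF norm_triangle_ineq]])
  also have "cmod (q * r * (b - sb)) = cmod q * cmod r * cmod (b - sb)" by (simp add: norm_mult)
  also have "\<dots> \<le> cmod q * cmod r * (cmod b + cmod sb)" by (intro mult_left_mono norm_triangle_ineq4) auto
  finally show ?thesis by (simp add: norm_mult)
qed

lemma LK_split: "LK K x = (\<Sum>k<K. cmod (fst (x k))) + (\<Sum>k<K. cmod (snd (x k)))"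
  unfolding LK_def nrm_def by (simp add: sum.distrib)

lemma StepA_bnd: "LK K (StepA q r n x) \<le> (1 + ee q r n) * LK K x"
proof -
  define a where "a k = fst (x k)" for k
  define b where "b k = snd (x k)" for k
  let ?q = "cmod (q n)" and ?r = "cmod (r n)"
  have pw: "nrm (StepA q r n x k) \<le> (1 + ?r) * cmod (sh a k) + (?q + ?q * ?r) * cmod (sh b k)
            + (1 + ?q + ?q * ?r) * cmod (b k)" for k
    using cm1[of "sh a k" "q n" "sh b k" "b k"] cm2[of "r n" "sh a k" "b k" "q n" "sh b k"]
    unfolding nrm_def StepA_def a_def[symmetric] b_def[symmetric]
    by (simp add: algebra_simps) 
  have "LK K (StepA q r n x) \<le> (\<Sum>k<K. (1 + ?r) * cmod (sh a k) + (?q + ?q * ?r) * cmod (sh b k)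
            + (1 + ?q + ?q * ?r) * cmod (b k))"
    unfolding LK_def by (rule sum_mono) (rule pw)
  also have "\<dots> = (1 + ?r) * (\<Sum>k<K. cmod (sh a k)) + (?q + ?q * ?r) * (\<Sum>k<K. cmod (sh b k))
            + (1 + ?q + ?q * ?r) * (\<Sum>k<K. cmod (b k))"
    by (simp add: sum.distrib sum_distrib_left)
  also have "\<dots> \<le> (1 + ?r) * (\<Sum>k<K. cmod (a k)) + (?q + ?q * ?r) * (\<Sum>k<K. cmod (b k))
            + (1 + ?q + ?q * ?r) * (\<Sum>k<K. cmod (b k))"
    by (intro add_mono mult_left_mono sh_sum_le order_refl) auto
  also have "\<dots> \<le> (1 + ee q r n) * ((\<Sum>k<K. cmod (a k)) + (\<Sum>k<K. cmod (b k)))"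
  proof -
    have A: "0 \<le> (\<Sum>k<K. cmod (a k))" "0 \<le> (\<Sum>k<K. cmod (b k))" by (auto intro: sum_nonneg)
    have "(1 + ?r) \<le> 1 + ee q r n" "(?q + ?q * ?r) + (1 + ?q + ?q * ?r) \<le> 1 + ee q r n"
      unfolding ee_def by auto
    then have h1: "(1 + ?r) * (\<Sum>k<K. cmod (a k)) \<le> (1 + ee q r n) * (\<Sum>k<K. cmod (a k))"
      and h2: "((?q + ?q * ?r) + (1 + ?q + ?q * ?r)) * (\<Sum>k<K. cmod (b k)) \<le> (1 + ee q r n) * (\<Sum>k<K. cmod (b k))"
      using A by (auto intro!: mult_right_mono)
    show ?thesis using h1 h2 by (simp only: distrib_left distrib_right; linarith)
  qed
  also have "\<dots> = (1 + ee q r n) * LK K x" unfolding LK_split a_def b_def ..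
  finally show ?thesis .
qed

lemma StepB_bnd: "LK K (StepB q r n x) \<le> (1 + ee q r n) * LK K x"
proof -
  define a where "a k = fst (x k)" for k
  define b where "b k = snd (x k)" for k
  let ?q = "cmod (q n)" and ?r = "cmod (r n)"
  have pw: "nrm (StepB q r n x k) \<le> (1 + ?r) * cmod (a k) + (1 + ?q + ?q * ?r) * cmod (sh b k)
            + (?q + ?q * ?r) * cmod (b k)" for k
    using cm3[of "a k" "q n" "b k" "sh b k"] cm4[of "r n" "a k" "sh b k" "q n" "b k"]
    unfolding nrm_def StepB_def a_def[symmetric] b_def[symmetric]
    by (simp add: algebra_simps) 
  have "LK K (StepB q r n x) \<le> (\<Sum>k<K. (1 + ?r) * cmod (a k) + (1 + ?q + ?q * ?r) * cmod (sh b k)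
            + (?q + ?q * ?r) * cmod (b k))"
    unfolding LK_def by (rule sum_mono) (rule pw)
  also have "\<dots> = (1 + ?r) * (\<Sum>k<K. cmod (a k)) + (1 + ?q + ?q * ?r) * (\<Sum>k<K. cmod (sh b k))
            + (?q + ?q * ?r) * (\<Sum>k<K. cmod (b k))"
    by (simp add: sum.distrib sum_distrib_left)
  also have "\<dots> \<le> (1 + ?r) * (\<Sum>k<K. cmod (a k)) + (1 + ?q + ?q * ?r) * (\<Sum>k<K. cmod (b k))
            + (?q + ?q * ?r) * (\<Sum>k<K. cmod (b k))"
    by (intro add_mono mult_left_mono sh_sum_le order_refl) auto
  also have "\<dots> \<le> (1 + ee q r n) * ((\<Sum>k<K. cmod (a k)) + (\<Sum>k<K. cmod (b k)))"
  proof -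
    have A: "0 \<le> (\<Sum>k<K. cmod (a k))" "0 \<le> (\<Sum>k<K. cmod (b k))" by (auto intro: sum_nonneg)
    have "(1 + ?r) \<le> 1 + ee q r n" "(?q + ?q * ?r) + (1 + ?q + ?q * ?r) \<le> 1 + ee q r n"
      unfolding ee_def by auto
    then have h1: "(1 + ?r) * (\<Sum>k<K. cmod (a k)) \<le> (1 + ee q r n) * (\<Sum>k<K. cmod (a k))"
      and h2: "((?q + ?q * ?r) + (1 + ?q + ?q * ?r)) * (\<Sum>k<K. cmod (b k)) \<le> (1 + ee q r n) * (\<Sum>k<K. cmod (b k))"
      using A by (auto intro!: mult_right_mono)
    show ?thesis using h1 h2 by (simp only: distrib_left distrib_right; linarith)
  qed
  also have "\<dots> = (1 + ee q r n) * LK K x" unfolding LK_split a_def b_def ..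
  finally show ?thesis .
qed

lemma delta_sum_le: "(\<Sum>k<(K::nat). (if k = i then c else 0)) \<le> (c::real)" if "c \<ge> 0"
proof -
  have "(\<Sum>k\<in>{..<K}. (if k = i then c else 0)) = (if i \<in> {..<K} then c else 0)"
    by (rule sum.delta) auto
  then show ?thesis using that by simp
qed

lemma StepA_st: "LK K (\<lambda>k. StepA q r n e2s k - e2s k) \<le> ee q r n"
proof -
  let ?c = "cmod (q n) + cmod (q n) * cmod (r n)"
  have pw: "nrm (StepA q r n e2s k - e2s k) \<le> (if k = 0 then ?c else 0) + (if k = 1 then ?c else 0)" for k
    by (cases "k = 0"; cases "k = 1") (auto simp: StepA_def e2s_def sh_def nrm_def norm_mult)
  have "LK K (\<lambda>k. StepA q r n e2s k - e2s k) \<le> (\<Sum>k<K. (if k = 0 then ?c else 0) + (if k = 1 then ?c else 0))"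
    unfolding LK_def by (rule sum_mono) (rule pw)
  also have "\<dots> \<le> ?c + ?c" unfolding sum.distrib by (intro add_mono delta_sum_le) auto
  also have "\<dots> \<le> ee q r n" unfolding ee_def by simp
  finally show ?thesis .
qed

lemma StepB_st: "LK K (\<lambda>k. StepB q r n e1s k - e1s k) \<le> ee q r n"
proof -
  have pw: "nrm (StepB q r n e1s k - e1s k) \<le> (if k = 0 then cmod (r n) else 0)" for k
    by (cases "k = 0") (auto simp: StepB_def e1s_def sh_def nrm_def norm_mult)
  have "LK K (\<lambda>k. StepB q r n e1s k - e1s k) \<le> (\<Sum>k<K. (if k = 0 then cmod (r n) else 0))"
    unfolding LK_def by (rule sum_mono) (rule pw)
  also have "\<dots> \<le> cmod (r n)" by (intro delta_sum_le) auto
  also have "\<dots> \<le> ee q r n" unfolding ee_def by simp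
  finally show ?thesis .
qed


definition ev :: "cseq \<Rightarrow> complex \<Rightarrow> complex \<times> complex" where
  "ev x w = ((\<Sum>k. fst (x k) * w ^ k), (\<Sum>k. snd (x k) * w ^ k))"

definition AS :: "cseq \<Rightarrow> bool" where "AS x \<longleftrightarrow> summable (\<lambda>k. nrm (x k))"

lemma AS_fst_norm: "AS x \<Longrightarrow> cmod w \<le> 1 \<Longrightarrow> summable (\<lambda>k. norm (fst (x k) * w ^ k))"
proof -
  assume x: "AS x" and w: "cmod w \<le> 1"
  show ?thesis
  proof (rule summable_comparison_test)
    show "summable (\<lambda>k. nrm (x k))" using x by (simp add: AS_def)
    have "norm (norm (fst (x k) * w ^ k)) \<le> nrm (x k)" for k
    proof -
      have "cmod w ^ k \<le> 1" using w by (simp add: power_le_one)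
      then have "cmod (fst (x k)) * cmod w ^ k \<le> cmod (fst (x k))"
        by (simp add: mult_left_le)
      then show ?thesis by (simp add: norm_mult norm_power nrm_def add_increasing add_increasing2)
    qed
    then show "\<exists>N. \<forall>k\<ge>N. norm (norm (fst (x k) * w ^ k)) \<le> nrm (x k)" by blast
  qed
qed

lemma AS_snd_norm: "AS x \<Longrightarrow> cmod w \<le> 1 \<Longrightarrow> summable (\<lambda>k. norm (snd (x k) * w ^ k))"
proof -
  assume x: "AS x" and w: "cmod w \<le> 1"
  show ?thesis
  proof (rule summable_comparison_test)
    show "summable (\<lambda>k. nrm (x k))" using x by (simp add: AS_def)
    have "norm (norm (snd (x k) * w ^ k)) \<le> nrm (x k)" for k
    proof -
      have "cmod w ^ k \<le> 1" using w by (simp add: power_le_one)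
      then have "cmod (snd (x k)) * cmod w ^ k \<le> cmod (snd (x k))"
        by (simp add: mult_left_le)
      then show ?thesis by (simp add: norm_mult norm_power nrm_def add_increasing add_increasing2)
    qed
    then show "\<exists>N. \<forall>k\<ge>N. norm (norm (snd (x k) * w ^ k)) \<le> nrm (x k)" by blast
  qed
qed

lemma AS_fst: "AS x \<Longrightarrow> cmod w \<le> 1 \<Longrightarrow> summable (\<lambda>k. fst (x k) * w ^ k)"
  by (rule summable_norm_cancel[OF AS_fst_norm])
lemma AS_snd: "AS x \<Longrightarrow> cmod w \<le> 1 \<Longrightarrow> summable (\<lambda>k. snd (x k) * w ^ k)"
  by (rule summable_norm_cancel[OF AS_snd_norm])

lemma nrm_uminus: "nrm (- v) = nrm v" by (simp add: nrm_def)

lemma AS_diff: "AS x \<Longrightarrow> AS y \<Longrightarrow> AS (\<lambda>k. x k - y k)"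
  unfolding AS_def
proof (rule summable_comparison_test[OF _ summable_add])
  have "nrm (x k - y k) \<le> nrm (x k) + nrm (y k)" for k
    using nrm_add[of "x k" "- y k"] by (simp add: nrm_uminus)
  then show "\<exists>N. \<forall>k\<ge>N. norm (nrm (x k - y k)) \<le> nrm (x k) + nrm (y k)"
    by (auto simp: nrm_nonneg)
qed auto

lemma AS_from: "AS (\<lambda>k. x k - y k) \<Longrightarrow> AS y \<Longrightarrow> AS x"
  unfolding AS_def
proof (rule summable_comparison_test[OF _ summable_add])
  have "nrm (x k) \<le> nrm (x k - y k) + nrm (y k)" for k
    using nrm_add[of "x k - y k" "y k"] by simp
  then show "\<exists>N. \<forall>k\<ge>N. norm (nrm (x k)) \<le> nrm (x k - y k) + nrm (y k)"
    by (auto simp: nrm_nonneg)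
qed auto

lemma AS_e1: "AS e1s"
proof -
  have "(\<lambda>k. nrm (e1s k)) = (\<lambda>k. if k = 0 then (\<lambda>_. 1::real) k else 0)"
    by (auto simp: e1s_def nrm_def)
  then show ?thesis unfolding AS_def using sums_summable[OF sums_single[of 0 "\<lambda>_. 1::real"]] by simp
qed

lemma AS_e2: "AS e2s"
proof -
  have "(\<lambda>k. nrm (e2s k)) = (\<lambda>k. if k = 0 then (\<lambda>_. 1::real) k else 0)"
    by (auto simp: e2s_def nrm_def)
  then show ?thesis unfolding AS_def using sums_summable[OF sums_single[of 0 "\<lambda>_. 1::real"]] by simp
qed

lemma ev_e1: "ev e1s w = (1, 0)"
proof -
  have "(\<lambda>k. fst (e1s k) * w ^ k) = (\<lambda>k. if k = 0 then (\<lambda>_. 1::complex) k else 0)"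
    by (auto simp: e1s_def)
  moreover have "(\<lambda>k. snd (e1s k) * w ^ k) = (\<lambda>k. 0)" by (auto simp: e1s_def)
  ultimately show ?thesis unfolding ev_def using sums_unique[OF sums_single[of 0 "\<lambda>_. 1::complex"]] by simp
qed

lemma ev_e2: "ev e2s w = (0, 1)"
proof -
  have "(\<lambda>k. snd (e2s k) * w ^ k) = (\<lambda>k. if k = 0 then (\<lambda>_. 1::complex) k else 0)"
    by (auto simp: e2s_def)
  moreover have "(\<lambda>k. fst (e2s k) * w ^ k) = (\<lambda>k. 0)" by (auto simp: e2s_def)
  ultimately show ?thesis unfolding ev_def using sums_unique[OF sums_single[of 0 "\<lambda>_. 1::complex"]] by simp
qed

lemma ev_sub: "AS x \<Longrightarrow> AS y \<Longrightarrow> cmod w \<le> 1 \<Longrightarrow> ev (\<lambda>k. x k - y k) w = ev x w - ev y w"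
proof -
  assume x: "AS x" and y: "AS y" and w: "cmod w \<le> 1"
  have e1: "(\<lambda>k. fst (x k - y k) * w ^ k) = (\<lambda>k. fst (x k) * w ^ k - fst (y k) * w ^ k)"
    by (simp add: left_diff_distrib fun_eq_iff)
  have e2: "(\<lambda>k. snd (x k - y k) * w ^ k) = (\<lambda>k. snd (x k) * w ^ k - snd (y k) * w ^ k)"
    by (simp add: left_diff_distrib fun_eq_iff)
  show ?thesis unfolding ev_def e1 e2
    using suminf_diff[OF AS_fst[OF x w] AS_fst[OF y w]] suminf_diff[OF AS_snd[OF x w] AS_snd[OF y w]]
    by simp
qed

lemma ev_norm: "AS z \<Longrightarrow> cmod w \<le> 1 \<Longrightarrow> nrm (ev z w) \<le> (\<Sum>k. nrm (z k))"
proof -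
  assume z: "AS z" and w: "cmod w \<le> 1"
  have s1: "summable (\<lambda>k. cmod (fst (z k)))" and s2: "summable (\<lambda>k. cmod (snd (z k)))"
    using z unfolding AS_def nrm_def
    by (auto intro: summable_comparison_test[where g="\<lambda>k. nrm (z k)", unfolded nrm_def])
  have "cmod (fst (ev z w)) \<le> (\<Sum>k. norm (fst (z k) * w ^ k))"
    unfolding ev_def fst_conv by (rule summable_norm[OF AS_fst_norm[OF z w]])
  also have "\<dots> \<le> (\<Sum>k. cmod (fst (z k)))"
  proof (rule suminf_le[OF _ AS_fst_norm[OF z w] s1])
    fix k have "cmod w ^ k \<le> 1" using w by (simp add: power_le_one)
    then show "norm (fst (z k) * w ^ k) \<le> cmod (fst (z k))"
      by (simp add: norm_mult norm_power mult_left_le)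
  qed
  finally have h1: "cmod (fst (ev z w)) \<le> (\<Sum>k. cmod (fst (z k)))" .
  have "cmod (snd (ev z w)) \<le> (\<Sum>k. norm (snd (z k) * w ^ k))"
    unfolding ev_def snd_conv by (rule summable_norm[OF AS_snd_norm[OF z w]])
  also have "\<dots> \<le> (\<Sum>k. cmod (snd (z k)))"
  proof (rule suminf_le[OF _ AS_snd_norm[OF z w] s2])
    fix k have "cmod w ^ k \<le> 1" using w by (simp add: power_le_one)
    then show "norm (snd (z k) * w ^ k) \<le> cmod (snd (z k))"
      by (simp add: norm_mult norm_power mult_left_le)
  qed
  finally have h2: "cmod (snd (ev z w)) \<le> (\<Sum>k. cmod (snd (z k)))" .
  have "(\<Sum>k. nrm (z k)) = (\<Sum>k. cmod (fst (z k))) + (\<Sum>k. cmod (snd (z k)))"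
    unfolding nrm_def by (rule suminf_add[OF s1 s2, symmetric])
  then show ?thesis using h1 h2 by (simp add: nrm_def)
qed

lemma sh_sums: "summable (\<lambda>k. a k * w ^ k) \<Longrightarrow> (\<lambda>k. sh a k * w ^ k) sums (w * (\<Sum>k. a k * w ^ k))"
proof -
  assume s: "summable (\<lambda>k. a k * w ^ k)"
  have "(\<lambda>k. w * (a k * w ^ k)) sums (w * (\<Sum>k. a k * w ^ k))"
    by (rule sums_mult[OF summable_sums[OF s]])
  moreover have "(\<lambda>k. sh a (Suc k) * w ^ Suc k) = (\<lambda>k. w * (a k * w ^ k))"
    by (auto simp: sh_def fun_eq_iff)
  ultimately have "(\<lambda>k. sh a (Suc k) * w ^ Suc k) sums (w * (\<Sum>k. a k * w ^ k))" by simp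
  then show ?thesis by (subst (asm) sums_Suc_iff) (simp add: sh_def)
qed

lemma ev_StepA:
  assumes x: "AS x" and w: "cmod w \<le> 1"
  shows "ev (StepA q r n x) w =
    (w * fst (ev x w) + (w - 1) * q n * snd (ev x w),
     w * r n * fst (ev x w) + snd (ev x w) + (w - 1) * q n * r n * snd (ev x w))"
proof -
  define a where "a = (\<lambda>k. fst (x k))"
  define b where "b = (\<lambda>k. snd (x k))"
  define A where "A = (\<Sum>k. a k * w ^ k)"
  define Bv where "Bv = (\<Sum>k. b k * w ^ k)"
  have ta: "(\<lambda>k. a k * w ^ k) sums A" unfolding A_def a_def by (rule summable_sums[OF AS_fst[OF x w]])
  have tb: "(\<lambda>k. b k * w ^ k) sums Bv" unfolding Bv_def b_def by (rule summable_sums[OF AS_snd[OF x w]])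
  have sa: "(\<lambda>k. sh a k * w ^ k) sums (w * A)" unfolding A_def a_def by (rule sh_sums[OF AS_fst[OF x w]])
  have sb: "(\<lambda>k. sh b k * w ^ k) sums (w * Bv)" unfolding Bv_def b_def by (rule sh_sums[OF AS_snd[OF x w]])
  have f1: "(\<lambda>k. sh a k * w ^ k + q n * (sh b k * w ^ k - b k * w ^ k)) sums (w * A + q n * (w * Bv - Bv))"
    by (intro sums_add sums_mult sums_diff sa sb tb)
  have f2: "(\<lambda>k. r n * (sh a k * w ^ k) + b k * w ^ k + q n * r n * (sh b k * w ^ k - b k * w ^ k))
       sums (r n * (w * A) + Bv + q n * r n * (w * Bv - Bv))"
    by (intro sums_add sums_mult sums_diff sa sb tb)
  have e1: "(\<lambda>k. fst (StepA q r n x k) * w ^ k) = (\<lambda>k. sh a k * w ^ k + q n * (sh b k * w ^ k - b k * w ^ k))"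
    by (simp add: StepA_def a_def b_def algebra_simps fun_eq_iff)
  have e2: "(\<lambda>k. snd (StepA q r n x k) * w ^ k) = (\<lambda>k. r n * (sh a k * w ^ k) + b k * w ^ k + q n * r n * (sh b k * w ^ k - b k * w ^ k))"
    by (simp add: StepA_def a_def b_def algebra_simps fun_eq_iff)
  have "ev x w = (A, Bv)" unfolding ev_def A_def Bv_def a_def b_def by simp
  moreover have "ev (StepA q r n x) w = (w * A + q n * (w * Bv - Bv), r n * (w * A) + Bv + q n * r n * (w * Bv - Bv))"
    unfolding ev_def e1 e2 using sums_unique[OF f1] sums_unique[OF f2] by simp
  ultimately show ?thesis by (simp add: algebra_simps)
qed

lemma ev_StepB:
  assumes x: "AS x" and w: "cmod w \<le> 1"
  shows "ev (StepB q r n x) w =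
    (fst (ev x w) + (1 - w) * q n * snd (ev x w),
     r n * fst (ev x w) + w * snd (ev x w) + (1 - w) * q n * r n * snd (ev x w))"
proof -
  define a where "a = (\<lambda>k. fst (x k))"
  define b where "b = (\<lambda>k. snd (x k))"
  define A where "A = (\<Sum>k. a k * w ^ k)"
  define Bv where "Bv = (\<Sum>k. b k * w ^ k)"
  have ta: "(\<lambda>k. a k * w ^ k) sums A" unfolding A_def a_def by (rule summable_sums[OF AS_fst[OF x w]])
  have tb: "(\<lambda>k. b k * w ^ k) sums Bv" unfolding Bv_def b_def by (rule summable_sums[OF AS_snd[OF x w]])
  have sb: "(\<lambda>k. sh b k * w ^ k) sums (w * Bv)" unfolding Bv_def b_def by (rule sh_sums[OF AS_snd[OF x w]])
  have f1: "(\<lambda>k. a k * w ^ k + q n * (b k * w ^ k - sh b k * w ^ k)) sums (A + q n * (Bv - w * Bv))"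
    by (intro sums_add sums_mult sums_diff ta sb tb)
  have f2: "(\<lambda>k. r n * (a k * w ^ k) + sh b k * w ^ k + q n * r n * (b k * w ^ k - sh b k * w ^ k))
       sums (r n * A + w * Bv + q n * r n * (Bv - w * Bv))"
    by (intro sums_add sums_mult sums_diff ta sb tb)
  have e1: "(\<lambda>k. fst (StepB q r n x k) * w ^ k) = (\<lambda>k. a k * w ^ k + q n * (b k * w ^ k - sh b k * w ^ k))"
    by (simp add: StepB_def a_def b_def algebra_simps fun_eq_iff)
  have e2: "(\<lambda>k. snd (StepB q r n x k) * w ^ k) = (\<lambda>k. r n * (a k * w ^ k) + sh b k * w ^ k + q n * r n * (b k * w ^ k - sh b k * w ^ k))"
    by (simp add: StepB_def a_def b_def algebra_simps fun_eq_iff)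
  have "ev x w = (A, Bv)" unfolding ev_def A_def Bv_def a_def b_def by simp
  moreover have "ev (StepB q r n x) w = (A + q n * (Bv - w * Bv), r n * A + w * Bv + q n * r n * (Bv - w * Bv))"
    unfolding ev_def e1 e2 using sums_unique[OF f1] sums_unique[OF f2] by simp
  ultimately show ?thesis by (simp add: algebra_simps)
qed


lemma gg_pos: "gg m > 0"
proof -
  have "0 < 1 + (real_of_int m)^2" by (simp add: add_pos_nonneg)
  then have "0 < 1 / (1 + (real_of_int m)^2)" by simp
  then show ?thesis using gg_lb[of m] by linarith
qed

lemma decay_facts:
  fixes f :: "int \<Rightarrow> real"
  assumes fpos: "\<And>m. 0 \<le> f m" and fb: "\<And>m. f m \<le> E * gg m"
  shows "(\<Prod>i<j. 1 + f (n + int i)) \<le> exp (2*E)"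
    and "summable (\<lambda>i. f (n + int i))"
    and "(\<Sum>i. f (n + int i)) \<le> E * (1 - tt n)"
proof -
  have E: "E \<ge> 0"
  proof -
    have "0 \<le> E * gg 0" using fpos[of 0] fb[of 0] by linarith
    then show ?thesis using gg_pos[of 0] by (simp add: zero_le_mult_iff)
  qed
  have ps: "(\<Sum>i<j. f (n + int i)) \<le> E * (1 - tt n)" for j
  proof -
    have "(\<Sum>i<j. f (n + int i)) \<le> (\<Sum>i<j. E * gg (n + int i))" by (intro sum_mono fb)
    also have "\<dots> = E * (tt (n + int j) - tt n)" by (simp add: sum_distrib_left[symmetric] gg_tele)
    also have "\<dots> \<le> E * (1 - tt n)" using tt_bound[of "n + int j"] E by (intro mult_left_mono) auto
    finally show ?thesis .
  qed
  have h12: "1 - tt n \<le> 2" using tt_bound[of n] by (simp add: abs_less_iff)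
  have ps2: "E * (1 - tt n) \<le> 2 * E" using mult_left_mono[OF h12 E] by (simp add: mult.commute)
  have "(\<Prod>i<j. 1 + f (n + int i)) \<le> exp (\<Sum>i<j. f (n + int i))"
    by (rule prod_le_exp_sum) (use fpos in auto)
  also have "\<dots> \<le> exp (2 * E)" using ps[of j] ps2 by simp
  finally show "(\<Prod>i<j. 1 + f (n + int i)) \<le> exp (2*E)" .
  show s: "summable (\<lambda>i. f (n + int i))"
    by (rule summableI_nonneg_bounded[where x="E * (1 - tt n)"]) (use fpos ps in auto)
  show "(\<Sum>i. f (n + int i)) \<le> E * (1 - tt n)"
    by (rule suminf_le_const[OF s]) (use ps in auto)
qed

lemma tail_lim: "((\<lambda>n::int. E * (1 - tt n)) \<longlongrightarrow> 0) at_top"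
proof -
  have ev: "eventually (\<lambda>n. E / (real_of_int n + 1) = E * (1 - tt n)) at_top"
    unfolding eventually_at_top_linorder by (rule exI[of _ 0]) (simp add: tt_tail)
  have "filterlim (\<lambda>n::int. 1 + real_of_int n) at_top at_top"
    by (rule filterlim_tendsto_add_at_top[OF tendsto_const filterlim_real_of_int_at_top])
  then have f: "filterlim (\<lambda>n::int. real_of_int n + 1) at_top at_top" by (simp add: add.commute)
  have "((\<lambda>n::int. E / (real_of_int n + 1)) \<longlongrightarrow> 0) at_top"
    by (rule tendsto_divide_0[OF tendsto_const filterlim_at_top_imp_at_infinity[OF f]])
  then show ?thesis using tendsto_cong[OF ev] by simp
qed

locale pot =
  fixes q r :: "int \<Rightarrow> complex"
  assumes rq: "rapidly_decreasing q" and rr: "rapidly_decreasing r"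
begin

lemma ee_bound_ex: "\<exists>E. \<forall>m. ee q r m \<le> E * gg m"
proof -
  obtain Cq where Cq: "\<And>m. (1 + (real_of_int m)^2) * cmod (q m) \<le> Cq" using rd_bound[OF rq] by blast
  obtain Cr where Cr: "\<And>m. (1 + (real_of_int m)^2) * cmod (r m) \<le> Cr" using rd_bound[OF rr] by blast
  have rb: "cmod (r m) \<le> Cr" for m
  proof -
    have "1 * cmod (r m) \<le> (1 + (real_of_int m)^2) * cmod (r m)" by (intro mult_right_mono) auto
    then show ?thesis using Cr[of m] by simp
  qed
  have Cq0: "Cq \<ge> 0" using Cq[of 0] by (metis mult_nonneg_nonneg norm_ge_zero order_trans zero_le_power2 add_nonneg_nonneg zero_le_one)
  define Ce where "Ce = 2*Cq + Cr + 2*Cq*Cr"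
  have "ee q r m \<le> 3 * Ce * gg m" for m
  proof -
    let ?w = "1 + (real_of_int m)^2"
    have w: "?w > 0" by (simp add: add_pos_nonneg)
    have "?w * ee q r m = 2 * (?w * cmod (q m)) + ?w * cmod (r m) + 2 * ((?w * cmod (q m)) * cmod (r m))"
      unfolding ee_def by (simp add: algebra_simps)
    also have "\<dots> \<le> 2 * Cq + Cr + 2 * (Cq * Cr)"
      by (intro add_mono mult_left_mono mult_mono Cq Cr rb) (auto simp: Cq0)
    finally have h: "?w * ee q r m \<le> Ce" unfolding Ce_def by simp
    have Ce0: "Ce \<ge> 0" using h w ee_nonneg[of q r m] by (meson mult_nonneg_nonneg less_le order_trans)
    have "ee q r m \<le> Ce * (1 / ?w)" using h w by (simp add: field_simps mult.commute)
    also have "\<dots> \<le> Ce * (3 * gg m)" using gg_lb[of m] Ce0 by (intro mult_left_mono) auto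
    finally show ?thesis by simp
  qed
  then show ?thesis by blast
qed

definition EE where "EE = (SOME E. \<forall>m. ee q r m \<le> E * gg m)"
lemma EE: "ee q r m \<le> EE * gg m"
  using someI_ex[OF ee_bound_ex] unfolding EE_def by blast

sublocale A: volt "StepA q r" e2s "ee q r" "exp (2*EE)"
  by unfold_locales (auto simp: StepA_lin StepA_bnd StepA_st ee_nonneg decay_facts[OF ee_nonneg EE])

sublocale Bb: volt "StepB q r" e1s "ee q r" "exp (2*EE)"
  by unfold_locales (auto simp: StepB_lin StepB_bnd StepB_st ee_nonneg decay_facts[OF ee_nonneg EE])

lemma AS_cA: "AS (A.c n)"
  by (rule AS_from[OF _ AS_e2]) (simp add: AS_def A.c_u_summable)

lemma AS_cB: "AS (Bb.c n)"
  by (rule AS_from[OF _ AS_e1]) (simp add: AS_def Bb.c_u_summable)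

lemma A_tl: "A.tl n 0 \<le> EE * (1 - tt n)"
  unfolding A.tl_def using decay_facts(3)[OF ee_nonneg EE] by simp

lemma Bb_tl: "Bb.tl n 0 \<le> EE * (1 - tt n)"
  unfolding Bb.tl_def using decay_facts(3)[OF ee_nonneg EE] by simp

lemma cA_close: "cmod w \<le> 1 \<Longrightarrow> nrm (ev (A.c n) w - (0, 1)) \<le> exp (2*EE) * (EE * (1 - tt n))"
proof -
  assume w: "cmod w \<le> 1"
  have "ev (A.c n) w - (0, 1) = ev (\<lambda>k. A.c n k - e2s k) w"
    using ev_sub[OF AS_cA AS_e2 w] by (simp add: ev_e2)
  also have "nrm \<dots> \<le> (\<Sum>k. nrm (A.c n k - e2s k))"
    by (rule ev_norm[OF AS_diff[OF AS_cA AS_e2] w])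
  also have "\<dots> \<le> exp (2*EE) * A.tl n 0" by (rule A.c_u_suminf)
  also have "\<dots> \<le> exp (2*EE) * (EE * (1 - tt n))" by (intro mult_left_mono A_tl) auto
  finally show ?thesis .
qed

lemma cB_close: "cmod w \<le> 1 \<Longrightarrow> nrm (ev (Bb.c n) w - (1, 0)) \<le> exp (2*EE) * (EE * (1 - tt n))"
proof -
  assume w: "cmod w \<le> 1"
  have "ev (Bb.c n) w - (1, 0) = ev (\<lambda>k. Bb.c n k - e1s k) w"
    using ev_sub[OF AS_cB AS_e1 w] by (simp add: ev_e1)
  also have "nrm \<dots> \<le> (\<Sum>k. nrm (Bb.c n k - e1s k))"
    by (rule ev_norm[OF AS_diff[OF AS_cB AS_e1] w])
  also have "\<dots> \<le> exp (2*EE) * Bb.tl n 0" by (rule Bb.c_u_suminf)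
  also have "\<dots> \<le> exp (2*EE) * (EE * (1 - tt n))" by (intro mult_left_mono Bb_tl) auto
  finally show ?thesis .
qed

lemma close_lim: "((\<lambda>n. exp (2*EE) * (EE * (1 - tt n))) \<longlongrightarrow> 0) at_top"
  using tendsto_mult[OF tendsto_const tail_lim, of "exp (2*EE)" EE] by simp

lemma cA_lim:
  assumes w: "cmod w \<le> 1"
  shows "((\<lambda>n. fst (ev (A.c n) w)) \<longlongrightarrow> 0) at_top" "((\<lambda>n. snd (ev (A.c n) w)) \<longlongrightarrow> 1) at_top"
proof -
  have "((\<lambda>n. fst (ev (A.c n) w) - 0) \<longlongrightarrow> 0) at_top"
    by (rule Lim_null_comparison[OF _ close_lim]) (use cA_close[OF w] in \<open>auto simp: nrm_def intro!: always_eventually order_trans[OF _ cA_close[OF w]]\<close>)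
  then show "((\<lambda>n. fst (ev (A.c n) w)) \<longlongrightarrow> 0) at_top" by simp
  have "((\<lambda>n. snd (ev (A.c n) w) - 1) \<longlongrightarrow> 0) at_top"
    by (rule Lim_null_comparison[OF _ close_lim]) (use cA_close[OF w] in \<open>auto simp: nrm_def intro!: always_eventually order_trans[OF _ cA_close[OF w]]\<close>)
  then show "((\<lambda>n. snd (ev (A.c n) w)) \<longlongrightarrow> 1) at_top" by (simp add: LIM_zero_iff)
qed

lemma cB_lim:
  assumes w: "cmod w \<le> 1"
  shows "((\<lambda>n. fst (ev (Bb.c n) w)) \<longlongrightarrow> 1) at_top" "((\<lambda>n. snd (ev (Bb.c n) w)) \<longlongrightarrow> 0) at_top"
proof -
  have "((\<lambda>n. fst (ev (Bb.c n) w) - 1) \<longlongrightarrow> 0) at_top"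
    by (rule Lim_null_comparison[OF _ close_lim]) (use cB_close[OF w] in \<open>auto simp: nrm_def intro!: always_eventually order_trans[OF _ cB_close[OF w]]\<close>)
  then show "((\<lambda>n. fst (ev (Bb.c n) w)) \<longlongrightarrow> 1) at_top" by (simp add: LIM_zero_iff)
  have "((\<lambda>n. snd (ev (Bb.c n) w) - 0) \<longlongrightarrow> 0) at_top"
    by (rule Lim_null_comparison[OF _ close_lim]) (use cB_close[OF w] in \<open>auto simp: nrm_def intro!: always_eventually order_trans[OF _ cB_close[OF w]]\<close>)
  then show "((\<lambda>n. snd (ev (Bb.c n) w)) \<longlongrightarrow> 0) at_top" by simp
qed

end


definition W :: "complex \<times> complex \<Rightarrow> complex \<times> complex \<Rightarrow> complex" where
  "W u v = fst u * snd v - snd u * fst v"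

lemma W_Q: "z \<noteq> 0 \<Longrightarrow> W (Q_step q r n z u) (Q_step q r n z v) = W u v"
  by (simp add: W_def Q_step_def field_simps)

lemma const_lim:
  fixes f :: "int \<Rightarrow> complex"
  assumes st: "\<And>n. f n = f (n + 1)" and lim: "(f \<longlongrightarrow> L) at_top"
  shows "f n = L"
proof -
  have j: "f (n + int j) = f n" for j
  proof (induction j)
    case (Suc j)
    have "f (n + int (Suc j)) = f ((n + int j) + 1)" by (simp add: ac_simps)
    also have "\<dots> = f (n + int j)" by (rule st[symmetric])
    finally show ?case using Suc by simp
  qed simp
  have "eventually (\<lambda>m. f m = f n) at_top"
    unfolding eventually_at_top_linorder
  proof (intro exI allI impI)
    fix m assume "m \<ge> n"
    then have "m = n + int (nat (m - n))" by simp
    then show "f m = f n" using j by metis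
  qed
  then have "(f \<longlongrightarrow> f n) at_top" by (rule tendsto_eventually)
  from tendsto_unique[OF trivial_limit_at_top_linorder this lim] show ?thesis .
qed

lemma W_const:
  assumes "solves_Q q r z u" "solves_Q q r z v" "z \<noteq> 0"
    and "((\<lambda>m. W (u m) (v m)) \<longlongrightarrow> L) at_top"
  shows "W (u n) (v n) = L"
proof (rule const_lim[where f="\<lambda>m. W (u m) (v m)"])
  fix n
  from assms(1)[unfolded solves_Q_def] have h1: "u n = Q_step q r n z (u (n+1))" by (rule spec)
  from assms(2)[unfolded solves_Q_def] have h2: "v n = Q_step q r n z (v (n+1))" by (rule spec)
  show "W (u n) (v n) = W (u (n+1)) (v (n+1))"
    using arg_cong2[where f=W, OF h1 h2] W_Q[OF assms(3)] by (rule trans)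
qed (rule assms(4))

lemma prod0:
  fixes f g h :: "int \<Rightarrow> complex"
  assumes "(f \<longlongrightarrow> 0) at_top" "(g \<longlongrightarrow> b) at_top" "\<And>m. cmod (h m) = cmod (f m) * cmod (g m)"
  shows "(h \<longlongrightarrow> 0) at_top"
proof -
  have f0: "((\<lambda>m. cmod (f m)) \<longlongrightarrow> 0) at_top" using assms(1) by (simp only: tendsto_norm_zero_iff)
  have "((\<lambda>m. cmod (f m) * cmod (g m)) \<longlongrightarrow> 0 * cmod b) at_top"
    by (intro tendsto_mult f0 tendsto_norm assms(2))
  then have "((\<lambda>m. cmod (h m)) \<longlongrightarrow> 0) at_top" using assms(3) by simp
  then show ?thesis by (simp add: tendsto_norm_zero_iff)
qed

lemma W_eq:
  assumes "W x y = 0" "W y v = W x v" "W y v \<noteq> 0"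
  shows "x = y"
proof -
  have "fst x * W y v = W x v * fst y" "snd x * W y v = W x v * snd y"
    using assms(1) unfolding W_def by (auto simp: algebra_simps)
  then show ?thesis using assms(2,3) by (simp add: prod_eq_iff)
qed

lemma cmod_powi: "cmod z = 1 \<Longrightarrow> cmod (z powi m) = 1"
  by (simp add: norm_power_int)

context pot
begin

definition Phi :: "int \<Rightarrow> complex \<Rightarrow> complex \<times> complex" where
  "Phi n z = (z powi n * fst (ev (A.c n) (z^2)), z powi n * snd (ev (A.c n) (z^2)))"

definition Phib :: "int \<Rightarrow> complex \<Rightarrow> complex \<times> complex" where
  "Phib n z = (z powi (-n) * fst (ev (Bb.c n) ((inverse z)^2)), z powi (-n) * snd (ev (Bb.c n) ((inverse z)^2)))"

lemma z2: "cmod z = 1 \<Longrightarrow> cmod (z^2) \<le> 1" by (simp add: norm_power)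
lemma iz2: "cmod z = 1 \<Longrightarrow> cmod ((inverse z)^2) \<le> 1" by (simp add: norm_power norm_inverse)

lemma Phi_Q:
  assumes z: "cmod z = 1"
  shows "Phi n z = Q_step q r n z (Phi (n+1) z)"
proof -
  have z0: "z \<noteq> 0" using z by auto
  have ev: "ev (A.c n) (z^2) = ev (StepA q r n (A.c (n+1))) (z^2)" using A.c_fix by metis
  also have "\<dots> = (z^2 * fst (ev (A.c (n+1)) (z^2)) + (z^2 - 1) * q n * snd (ev (A.c (n+1)) (z^2)),
     z^2 * r n * fst (ev (A.c (n+1)) (z^2)) + snd (ev (A.c (n+1)) (z^2)) + (z^2 - 1) * q n * r n * snd (ev (A.c (n+1)) (z^2)))"
    by (rule ev_StepA[OF AS_cA z2[OF z]])
  finally have e: "ev (A.c n) (z^2) = \<dots>" .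
  have p: "z powi (n+1) = z powi n * z" using z0 by (simp add: power_int_add)
  show ?thesis unfolding Phi_def Q_step_def e p using z0
    by (simp add: field_simps power2_eq_square)
qed

lemma Phib_Q:
  assumes z: "cmod z = 1"
  shows "Phib n z = Q_step q r n z (Phib (n+1) z)"
proof -
  have z0: "z \<noteq> 0" using z by auto
  let ?w = "(inverse z)^2"
  have ev: "ev (Bb.c n) ?w = ev (StepB q r n (Bb.c (n+1))) ?w" using Bb.c_fix by metis
  also have "\<dots> = (fst (ev (Bb.c (n+1)) ?w) + (1 - ?w) * q n * snd (ev (Bb.c (n+1)) ?w),
     r n * fst (ev (Bb.c (n+1)) ?w) + ?w * snd (ev (Bb.c (n+1)) ?w) + (1 - ?w) * q n * r n * snd (ev (Bb.c (n+1)) ?w))"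
    by (rule ev_StepB[OF AS_cB iz2[OF z]])
  finally have e: "ev (Bb.c n) ?w = \<dots>" .
  have p: "z powi (- (n+1)) = z powi (-n) * inverse z" using z0
    by (simp add: power_int_diff power_int_minus field_simps)
  show ?thesis unfolding Phib_def Q_step_def e p using z0
    by (simp add: field_simps power2_eq_square)
qed

lemma Phi_solves: "cmod z = 1 \<Longrightarrow> solves_Q q r z (\<lambda>n. Phi n z)"
  unfolding solves_Q_def using Phi_Q by (intro allI) (rule Phi_Q)
lemma Phib_solves: "cmod z = 1 \<Longrightarrow> solves_Q q r z (\<lambda>n. Phib n z)"
  unfolding solves_Q_def by (intro allI) (rule Phib_Q)

end


context pot
begin

lemma psi_eq:
  assumes z: "cmod z = 1" and u: "solves_Q q r z u" and ja: "jost_psi_asym z u"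
  shows "u n = Phi n z"
proof -
  have z0: "z \<noteq> 0" using z by auto
  define Am where "Am m = fst (ev (A.c m) (z^2))" for m
  define Bm where "Bm m = snd (ev (A.c m) (z^2))" for m
  define Cm where "Cm m = fst (ev (Bb.c m) ((inverse z)^2))" for m
  define Dm where "Dm m = snd (ev (Bb.c m) ((inverse z)^2))" for m
  have lA: "(Am \<longlongrightarrow> 0) at_top" and lB: "(Bm \<longlongrightarrow> 1) at_top"
    using cA_lim[OF z2[OF z]] unfolding Am_def Bm_def by auto
  have lC: "(Cm \<longlongrightarrow> 1) at_top" and lD: "(Dm \<longlongrightarrow> 0) at_top"
    using cB_lim[OF iz2[OF z]] unfolding Cm_def Dm_def by auto
  have u1: "((\<lambda>m. fst (u m)) \<longlongrightarrow> 0) at_top" and u2: "((\<lambda>m. snd (u m) / z powi m) \<longlongrightarrow> 1) at_top"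
    using ja unfolding jost_psi_asym_def by auto
  have zp: "cmod (z powi m) = 1" for m using cmod_powi[OF z] .
  have zpi: "z powi (-m) = inverse (z powi m)" for m by (simp add: power_int_minus)
  have zn: "z powi m \<noteq> 0" for m using z0 by simp
  have Phi_eq: "Phi m z = (z powi m * Am m, z powi m * Bm m)" for m unfolding Phi_def Am_def Bm_def by simp
  have Phib_eq: "Phib m z = (z powi (-m) * Cm m, z powi (-m) * Dm m)" for m unfolding Phib_def Cm_def Dm_def by simp
  have W1: "((\<lambda>m. W (u m) (Phi m z)) \<longlongrightarrow> 0 - 0) at_top"
    unfolding W_def Phi_eq fst_conv snd_conv
  proof (intro tendsto_diff)
    show "((\<lambda>m. fst (u m) * (z powi m * Bm m)) \<longlongrightarrow> 0) at_top"
      by (rule prod0[OF u1 lB]) (simp add: norm_mult zp)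
    show "((\<lambda>m. snd (u m) * (z powi m * Am m)) \<longlongrightarrow> 0) at_top"
      by (rule prod0[OF lA u2]) (simp add: norm_mult norm_divide zp)
  qed
  have W2: "((\<lambda>m. W (u m) (Phib m z)) \<longlongrightarrow> 0 - 1 * 1) at_top"
    unfolding W_def Phib_eq fst_conv snd_conv
  proof (intro tendsto_diff)
    show "((\<lambda>m. fst (u m) * (z powi (-m) * Dm m)) \<longlongrightarrow> 0) at_top"
      by (rule prod0[OF u1 lD]) (simp add: norm_mult zp)
    have "(\<lambda>m. snd (u m) * (z powi (-m) * Cm m)) = (\<lambda>m. (snd (u m) / z powi m) * Cm m)"
      by (simp add: zpi field_simps)
    then show "((\<lambda>m. snd (u m) * (z powi (-m) * Cm m)) \<longlongrightarrow> 1 * 1) at_top"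
      using tendsto_mult[OF u2 lC] by simp
  qed
  have W3: "((\<lambda>m. W (Phi m z) (Phib m z)) \<longlongrightarrow> 0 * 0 - 1 * 1) at_top"
  proof -
    have "(\<lambda>m. W (Phi m z) (Phib m z)) = (\<lambda>m. Am m * Dm m - Bm m * Cm m)"
      unfolding W_def Phi_eq Phib_eq using z0 by (simp add: zpi field_simps zn)
    then show ?thesis using tendsto_diff[OF tendsto_mult[OF lA lD] tendsto_mult[OF lB lC]] by simp
  qed
  have a: "W (u n) (Phi n z) = 0" using W_const[OF u Phi_solves[OF z] z0 W1] by simp
  have b: "W (u n) (Phib n z) = -1" using W_const[OF u Phib_solves[OF z] z0 W2] by simp
  have c: "W (Phi n z) (Phib n z) = -1" using W_const[OF Phi_solves[OF z] Phib_solves[OF z] z0 W3] by simp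
  show ?thesis by (rule W_eq[where v="Phib n z"]) (use a b c in auto)
qed

lemma psib_eq:
  assumes z: "cmod z = 1" and u: "solves_Q q r z u" and ja: "jost_psibar_asym z u"
  shows "u n = Phib n z"
proof -
  have z0: "z \<noteq> 0" using z by auto
  define Am where "Am m = fst (ev (A.c m) (z^2))" for m
  define Bm where "Bm m = snd (ev (A.c m) (z^2))" for m
  define Cm where "Cm m = fst (ev (Bb.c m) ((inverse z)^2))" for m
  define Dm where "Dm m = snd (ev (Bb.c m) ((inverse z)^2))" for m
  have lA: "(Am \<longlongrightarrow> 0) at_top" and lB: "(Bm \<longlongrightarrow> 1) at_top"
    using cA_lim[OF z2[OF z]] unfolding Am_def Bm_def by auto
  have lC: "(Cm \<longlongrightarrow> 1) at_top" and lD: "(Dm \<longlongrightarrow> 0) at_top"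
    using cB_lim[OF iz2[OF z]] unfolding Cm_def Dm_def by auto
  have u1: "((\<lambda>m. fst (u m) / z powi (-m)) \<longlongrightarrow> 1) at_top" and u2: "((\<lambda>m. snd (u m)) \<longlongrightarrow> 0) at_top"
    using ja unfolding jost_psibar_asym_def by auto
  have zp: "cmod (z powi m) = 1" for m using cmod_powi[OF z] .
  have zpi: "z powi (-m) = inverse (z powi m)" for m by (simp add: power_int_minus)
  have zn: "z powi m \<noteq> 0" for m using z0 by simp
  have Phi_eq: "Phi m z = (z powi m * Am m, z powi m * Bm m)" for m unfolding Phi_def Am_def Bm_def by simp
  have Phib_eq: "Phib m z = (z powi (-m) * Cm m, z powi (-m) * Dm m)" for m unfolding Phib_def Cm_def Dm_def by simp
  have W1: "((\<lambda>m. W (u m) (Phib m z)) \<longlongrightarrow> 0 - 0) at_top"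
    unfolding W_def Phib_eq fst_conv snd_conv
  proof (intro tendsto_diff)
    show "((\<lambda>m. fst (u m) * (z powi (-m) * Dm m)) \<longlongrightarrow> 0) at_top"
      by (rule prod0[OF lD u1]) (simp add: norm_mult norm_divide zp zpi norm_inverse)
    show "((\<lambda>m. snd (u m) * (z powi (-m) * Cm m)) \<longlongrightarrow> 0) at_top"
      by (rule prod0[OF u2 lC]) (simp add: norm_mult zp zpi norm_inverse)
  qed
  have W2: "((\<lambda>m. W (u m) (Phi m z)) \<longlongrightarrow> 1 * 1 - 0) at_top"
    unfolding W_def Phi_eq fst_conv snd_conv
  proof (intro tendsto_diff)
    have "(\<lambda>m. fst (u m) * (z powi m * Bm m)) = (\<lambda>m. (fst (u m) / z powi (-m)) * Bm m)"
      by (simp add: zpi field_simps)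
    then show "((\<lambda>m. fst (u m) * (z powi m * Bm m)) \<longlongrightarrow> 1 * 1) at_top"
      using tendsto_mult[OF u1 lB] by simp
    show "((\<lambda>m. snd (u m) * (z powi m * Am m)) \<longlongrightarrow> 0) at_top"
      by (rule prod0[OF u2 lA]) (simp add: norm_mult zp)
  qed
  have W3: "((\<lambda>m. W (Phib m z) (Phi m z)) \<longlongrightarrow> 1 * 1 - 0 * 0) at_top"
  proof -
    have "(\<lambda>m. W (Phib m z) (Phi m z)) = (\<lambda>m. Cm m * Bm m - Dm m * Am m)"
      unfolding W_def Phi_eq Phib_eq using z0 by (simp add: zpi field_simps zn)
    then show ?thesis using tendsto_diff[OF tendsto_mult[OF lC lB] tendsto_mult[OF lD lA]] by simp
  qed
  have a: "W (u n) (Phib n z) = 0" using W_const[OF u Phib_solves[OF z] z0 W1] by simp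
  have b: "W (u n) (Phi n z) = 1" using W_const[OF u Phi_solves[OF z] z0 W2] by simp
  have c: "W (Phib n z) (Phi n z) = 1" using W_const[OF Phib_solves[OF z] Phi_solves[OF z] z0 W3] by simp
  show ?thesis by (rule W_eq[where v="Phi n z"]) (use a b c in auto)
qed

end


lemma circ_series:
  fixes a :: "nat \<Rightarrow> complex" and \<sigma> :: "nat \<Rightarrow> int"
  assumes s: "summable (\<lambda>k. cmod (a k))"
  shows "contour_integral (circlepath 0 1) (\<lambda>z. (\<Sum>k. a k * z powi \<sigma> k) * z powi p)
     = 2 * pi * \<i> * (\<Sum>k. if \<sigma> k + p = -1 then a k else 0)"
proof -
  define I where "I t = (if t = -1 then 2*pi*\<i> else (0::complex))" for t :: int
  define f where "f N z = (\<Sum>k<N. a k * z powi (\<sigma> k + p))" for N z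
  define l where "l z = (\<Sum>k. a k * z powi (\<sigma> k + p))" for z
  have ci1: "((\<lambda>z. z powi t) has_contour_integral I t) (circlepath 0 1)" for t
    unfolding I_def by (rule circ_powi)
  have hf: "(f N has_contour_integral (\<Sum>k<N. a k * I (\<sigma> k + p))) (circlepath 0 1)" for N
    unfolding f_def
    by (intro has_contour_integral_sum has_contour_integral_lmul ci1) auto
  have ul: "uniform_limit (sphere 0 1) f l sequentially"
    unfolding f_def l_def
  proof (rule Weierstrass_m_test[OF _ s])
    fix k and z :: complex assume "z \<in> sphere 0 1"
    then have "cmod z = 1" by simp
    then show "norm (a k * z powi (\<sigma> k + p)) \<le> cmod (a k)" by (simp add: norm_mult norm_power_int)
  qed
  have lim: "((\<lambda>N. contour_integral (circlepath 0 1) (f N)) \<longlongrightarrow> contour_integral (circlepath 0 1) l) sequentially"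
    by (rule contour_integral_uniform_limit_circlepath(2)[OF _ ul]) (use hf has_contour_integral_integrable in \<open>auto intro!: always_eventually\<close>)
  have ci: "contour_integral (circlepath 0 1) (f N) = 2*pi*\<i> * (\<Sum>k<N. if \<sigma> k + p = -1 then a k else 0)" for N
    using contour_integral_unique[OF hf[of N]] by (simp add: I_def sum_distrib_left if_distrib mult.commute cong: if_cong)
  have sm: "summable (\<lambda>k. if \<sigma> k + p = -1 then a k else 0)"
    by (rule summable_comparison_test[OF _ s]) auto
  have lim2: "((\<lambda>N. contour_integral (circlepath 0 1) (f N)) \<longlongrightarrow> 2*pi*\<i> * (\<Sum>k. if \<sigma> k + p = -1 then a k else 0)) sequentially"
    unfolding ci by (intro tendsto_mult tendsto_const summable_LIMSEQ sm)
  have "contour_integral (circlepath 0 1) l = 2*pi*\<i> * (\<Sum>k. if \<sigma> k + p = -1 then a k else 0)"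
    using LIMSEQ_unique[OF lim lim2] .
  moreover have "contour_integral (circlepath 0 1) (\<lambda>z. (\<Sum>k. a k * z powi \<sigma> k) * z powi p) = contour_integral (circlepath 0 1) l"
  proof (rule contour_integral_eq)
    fix z assume "z \<in> path_image (circlepath 0 1)"
    then have z: "cmod z = 1" by simp
    then have z0: "z \<noteq> 0" by auto
    have sa: "summable (\<lambda>k. a k * z powi \<sigma> k)"
      by (rule summable_comparison_test[OF _ s]) (auto simp: norm_mult norm_power_int z)
    have "(\<Sum>k. a k * z powi \<sigma> k) * z powi p = (\<Sum>k. a k * z powi \<sigma> k * z powi p)"
      by (rule suminf_mult2[OF sa])
    also have "\<dots> = l z" unfolding l_def using z0 by (simp add: power_int_add mult.assoc)
    finally show "(\<Sum>k. a k * z powi \<sigma> k) * z powi p = l z" .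
  qed
  ultimately show ?thesis by simp
qed

lemma single_even: "(\<Sum>k. if 2 * int k = int j then a k else (0::complex)) = (if even j then a (j div 2) else 0)"
proof (cases "even j")
  case True
  have "(\<lambda>k. if 2 * int k = int j then a k else 0) = (\<lambda>k. if k = j div 2 then a k else 0)"
    using True by (auto simp: fun_eq_iff)
  then show ?thesis using True sums_unique[OF sums_single[of "j div 2" a]] by simp
next
  case False
  have "(\<lambda>k. if 2 * int k = int j then a k else 0) = (\<lambda>k. 0)"
    using False by (auto simp: fun_eq_iff) (metis even_of_nat dvd_triv_left)
  then show ?thesis using False by simp
qed

lemma circ_coeff_pos:
  assumes "summable (\<lambda>k. cmod (a k))"
  shows "contour_integral (circlepath 0 1) (\<lambda>z. (\<Sum>k. a k * z powi (2 * int k)) * z powi (- int j - 1)) / (2*pi*\<i>)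
         = (if even j then a (j div 2) else 0)"
proof -
  have "(\<lambda>k. if 2 * int k + (- int j - 1) = -1 then a k else 0) = (\<lambda>k. if 2 * int k = int j then a k else 0)"
    by (auto simp: fun_eq_iff)
  then show ?thesis using circ_series[OF assms, where \<sigma>="\<lambda>k. 2 * int k" and p="- int j - 1"] single_even[of j a]
    by simp
qed

lemma circ_coeff_neg:
  assumes "summable (\<lambda>k. cmod (a k))"
  shows "contour_integral (circlepath 0 1) (\<lambda>z. (\<Sum>k. a k * z powi (- (2 * int k))) * z powi (int j - 1)) / (2*pi*\<i>)
         = (if even j then a (j div 2) else 0)"
proof -
  have "(\<lambda>k. if - (2 * int k) + (int j - 1) = -1 then a k else 0) = (\<lambda>k. if 2 * int k = int j then a k else 0)"
    by (auto simp: fun_eq_iff)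
  then show ?thesis using circ_series[OF assms, where \<sigma>="\<lambda>k. - (2 * int k)" and p="int j - 1"] single_even[of j a]
    by simp
qed


lemma pow2k: "(z^2)^k = (z::complex) powi (2 * int k)"
  by (metis power_int_of_nat power_mult of_nat_mult of_nat_numeral)

lemma ipow2k: "z \<noteq> 0 \<Longrightarrow> ((inverse z)^2)^k = (z::complex) powi (- (2 * int k))"
  by (simp add: pow2k[symmetric] power_int_minus power_inverse)

lemma summable_fst_nrm: "AS x \<Longrightarrow> summable (\<lambda>k. cmod (fst (x k)))"
  unfolding AS_def by (rule summable_comparison_test[where g="\<lambda>k. nrm (x k)"]) (auto simp: nrm_def)
lemma summable_snd_nrm: "AS x \<Longrightarrow> summable (\<lambda>k. cmod (snd (x k)))"
  unfolding AS_def by (rule summable_comparison_test[where g="\<lambda>k. nrm (x k)"]) (auto simp: nrm_def)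

context pot
begin

lemma K_formula:
  assumes h: "\<And>z. cmod z = 1 \<Longrightarrow> solves_Q q r z (\<lambda>n. \<psi> n z) \<and> jost_psi_asym z (\<lambda>n. \<psi> n z)"
  shows "Kker \<psi> n (n + int j) = (if even j then A.c n (j div 2) else 0)"
proof -
  have eq: "\<psi> n z = Phi n z" if z: "cmod z = 1" for z
    using psi_eq[OF z, of "\<lambda>n. \<psi> n z"] h[OF z] by blast
  have pw: "z powi n * z powi (- (n + int j) - 1) = z powi (- int j - 1)" if "z \<noteq> 0" for z :: complex
    using that by (simp add: power_int_add[symmetric])
  have i1: "contour_integral (circlepath 0 1) (\<lambda>z. fst (\<psi> n z) * z powi (- (n + int j) - 1))
      = contour_integral (circlepath 0 1) (\<lambda>z. (\<Sum>k. fst (A.c n k) * z powi (2 * int k)) * z powi (- int j - 1))"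
  proof (rule contour_integral_eq)
    fix z assume "z \<in> path_image (circlepath 0 1)"
    then have z: "cmod z = 1" by simp
    then have z0: "z \<noteq> 0" by auto
    show "fst (\<psi> n z) * z powi (- (n + int j) - 1) = (\<Sum>k. fst (A.c n k) * z powi (2 * int k)) * z powi (- int j - 1)"
      unfolding eq[OF z] Phi_def ev_def fst_conv pow2k using pw[OF z0] by (simp add: ac_simps)
  qed
  have i2: "contour_integral (circlepath 0 1) (\<lambda>z. snd (\<psi> n z) * z powi (- (n + int j) - 1))
      = contour_integral (circlepath 0 1) (\<lambda>z. (\<Sum>k. snd (A.c n k) * z powi (2 * int k)) * z powi (- int j - 1))"
  proof (rule contour_integral_eq)
    fix z assume "z \<in> path_image (circlepath 0 1)"
    then have z: "cmod z = 1" by simp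
    then have z0: "z \<noteq> 0" by auto
    show "snd (\<psi> n z) * z powi (- (n + int j) - 1) = (\<Sum>k. snd (A.c n k) * z powi (2 * int k)) * z powi (- int j - 1)"
      unfolding eq[OF z] Phi_def ev_def snd_conv pow2k using pw[OF z0] by (simp add: ac_simps)
  qed
  show ?thesis
    unfolding Kker_def circ_coeff_def fst_conv snd_conv i1 i2
      circ_coeff_pos[OF summable_fst_nrm[OF AS_cA]] circ_coeff_pos[OF summable_snd_nrm[OF AS_cA]]
    by (simp add: zero_prod_def)
qed

lemma Kb_formula:
  assumes h: "\<And>z. cmod z = 1 \<Longrightarrow> solves_Q q r z (\<lambda>n. \<psi>b n z) \<and> jost_psibar_asym z (\<lambda>n. \<psi>b n z)"
  shows "Kbker \<psi>b n (n + int j) = (if even j then Bb.c n (j div 2) else 0)"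
proof -
  have eq: "\<psi>b n z = Phib n z" if z: "cmod z = 1" for z
    using psib_eq[OF z, of "\<lambda>n. \<psi>b n z"] h[OF z] by blast
  have pw: "z powi (-n) * z powi (n + int j - 1) = z powi (int j - 1)" if "z \<noteq> 0" for z :: complex
    using that by (simp add: power_int_add[symmetric])
  have i1: "contour_integral (circlepath 0 1) (\<lambda>z. fst (\<psi>b n z) * z powi (n + int j - 1))
      = contour_integral (circlepath 0 1) (\<lambda>z. (\<Sum>k. fst (Bb.c n k) * z powi (- (2 * int k))) * z powi (int j - 1))"
  proof (rule contour_integral_eq)
    fix z assume "z \<in> path_image (circlepath 0 1)"
    then have z: "cmod z = 1" by simp
    then have z0: "z \<noteq> 0" by auto
    show "fst (\<psi>b n z) * z powi (n + int j - 1) = (\<Sum>k. fst (Bb.c n k) * z powi (- (2 * int k))) * z powi (int j - 1)"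
      unfolding eq[OF z] Phib_def ev_def fst_conv ipow2k[OF z0] using pw[OF z0] by (simp add: ac_simps)
  qed
  have i2: "contour_integral (circlepath 0 1) (\<lambda>z. snd (\<psi>b n z) * z powi (n + int j - 1))
      = contour_integral (circlepath 0 1) (\<lambda>z. (\<Sum>k. snd (Bb.c n k) * z powi (- (2 * int k))) * z powi (int j - 1))"
  proof (rule contour_integral_eq)
    fix z assume "z \<in> path_image (circlepath 0 1)"
    then have z: "cmod z = 1" by simp
    then have z0: "z \<noteq> 0" by auto
    show "snd (\<psi>b n z) * z powi (n + int j - 1) = (\<Sum>k. snd (Bb.c n k) * z powi (- (2 * int k))) * z powi (int j - 1)"
      unfolding eq[OF z] Phib_def ev_def snd_conv ipow2k[OF z0] using pw[OF z0] by (simp add: ac_simps)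
  qed
  show ?thesis
    unfolding Kbker_def circ_coeff_def fst_conv snd_conv i1 i2
      circ_coeff_neg[OF summable_fst_nrm[OF AS_cB]] circ_coeff_neg[OF summable_snd_nrm[OF AS_cB]]
    by (simp add: zero_prod_def)
qed

end


lemma sums_interleave:
  fixes f :: "nat \<Rightarrow> complex"
  assumes "f sums s"
  shows "(\<lambda>j. if even j then f (j div 2) else 0) sums s"
proof -
  define g where "g j = (if even j then f (j div 2) else 0)" for j
  have ps: "(\<Sum>j<n. g j) = (\<Sum>k<(n+1) div 2. f k)" for n
  proof (induction n)
    case (Suc n)
    show ?case
    proof (cases "even n")
      case True
      then have "(Suc n + 1) div 2 = Suc ((n + 1) div 2)" "(n+1) div 2 = n div 2" by presburger+
      then show ?thesis using Suc True by (simp add: g_def)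
    next
      case False
      then have "(Suc n + 1) div 2 = (n + 1) div 2" by presburger
      then show ?thesis using Suc False by (simp add: g_def)
    qed
  qed simp
  have S: "(\<lambda>n. \<Sum>k<n. f k) \<longlonglongrightarrow> s" using assms by (simp add: sums_def)
  have "(\<lambda>n. \<Sum>j<n. g j) \<longlonglongrightarrow> s"
  proof (rule LIMSEQ_I)
    fix e :: real assume "e > 0"
    from LIMSEQ_D[OF S this] obtain N where N: "\<And>m. m \<ge> N \<Longrightarrow> norm ((\<Sum>k<m. f k) - s) < e" by blast
    have "norm ((\<Sum>j<n. g j) - s) < e" if "n \<ge> 2 * N" for n
      unfolding ps using that by (intro N) linarith
    then show "\<exists>N. \<forall>n\<ge>N. norm ((\<Sum>j<n. g j) - s) < e" by blast
  qed
  then show ?thesis unfolding sums_def g_def .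
qed

lemma solve2_sums:
  assumes "(\<lambda>j. fst (V j)) sums v1" "(\<lambda>j. snd (V j)) sums v2"
  shows "(\<lambda>j. fst (solve2 a b (V j))) sums fst (solve2 a b (v1, v2))"
    and "(\<lambda>j. snd (solve2 a b (V j))) sums snd (solve2 a b (v1, v2))"
  unfolding solve2_def Let_def fst_conv snd_conv
  by (intro sums_divide sums_diff sums_mult assms)+

lemma final_alg:
  fixes C b' q r R :: complex
  assumes C: "C \<noteq> 0" and b: "b' \<noteq> 0"
  defines "a \<equiv> (C, r * C)" and "bb \<equiv> (- q * b', (1 - q * r) * b')"
  defines "X \<equiv> solve2 a bb (0, 1)" and "Y \<equiv> solve2 a bb (1, R)"
  shows "q = fst X * snd X / (fst Y * snd X - fst X * snd Y)" and "snd Y / snd X = R - r"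
proof -
  have d: "fst a * snd bb - snd a * fst bb = C * b'" unfolding a_def bb_def by (simp add: algebra_simps)
  have X: "X = (q / C, 1 / b')" unfolding X_def solve2_def Let_def d using C b
    by (simp add: a_def bb_def field_simps)
  have Y: "Y = ((1 - q * r + q * R) / C, (R - r) / b')" unfolding Y_def solve2_def Let_def d using C b
    by (simp add: a_def bb_def field_simps)
  show "q = fst X * snd X / (fst Y * snd X - fst X * snd Y)" unfolding X Y using C b
    by (simp add: field_simps)
  show "snd Y / snd X = R - r" unfolding X Y using b by (simp add: field_simps)
qed

lemma nonzero_lim:
  fixes f :: "int \<Rightarrow> complex"
  assumes lim: "(f \<longlongrightarrow> 1) at_top" and rec: "\<And>m. f m = \<alpha> m * f (m + 1)" and nz: "\<And>m. \<alpha> m \<noteq> 0"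
  shows "f n \<noteq> 0"
proof
  assume f0: "f n = 0"
  have j: "f (n + int j) = 0" for j
  proof (induction j)
    case (Suc j)
    have "f (n + int j) = \<alpha> (n + int j) * f (n + int j + 1)" by (rule rec)
    then have "f (n + int j + 1) = 0" using Suc nz by simp
    then show ?case by (simp add: ac_simps)
  qed (simp add: f0)
  have "eventually (\<lambda>m. f m = 0) at_top"
    unfolding eventually_at_top_linorder
  proof (intro exI allI impI)
    fix m assume "m \<ge> n"
    then have "m = n + int (nat (m - n))" by simp
    then show "f m = 0" using j by metis
  qed
  then have "(f \<longlongrightarrow> 0) at_top" by (rule tendsto_eventually)
  from tendsto_unique[OF trivial_limit_at_top_linorder this lim] show False by simp
qed

context pot
begin

lemma evA1: "ev (A.c n) 1 = (0, 1)"
proof -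
  define X where "X m = ev (A.c m) 1" for m
  have rec: "X m = (fst (X (m+1)), r m * fst (X (m+1)) + snd (X (m+1)))" for m
  proof -
    have "X m = ev (StepA q r m (A.c (m+1))) 1" unfolding X_def using A.c_fix by metis
    also have "\<dots> = (fst (X (m+1)), r m * fst (X (m+1)) + snd (X (m+1)))"
      by (subst ev_StepA[OF AS_cA]) (auto simp: X_def)
    finally show ?thesis .
  qed
  have l1: "((\<lambda>m. fst (X m)) \<longlongrightarrow> 0) at_top" and l2: "((\<lambda>m. snd (X m)) \<longlongrightarrow> 1) at_top"
    using cA_lim[of 1] unfolding X_def by auto
  have f0: "fst (X m) = 0" for m
    by (rule const_lim[OF _ l1]) (subst rec, simp)
  have s1: "snd (X m) = 1" for m
    by (rule const_lim[OF _ l2]) (subst rec, simp add: f0)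
  show ?thesis using f0[of n] s1[of n] unfolding X_def by (simp add: prod_eq_iff)
qed

lemma evB1: "fst (ev (Bb.c n) 1) = 1" "snd (ev (Bb.c n) 1) = r n + snd (ev (Bb.c (n+1)) 1)"
proof -
  define X where "X m = ev (Bb.c m) 1" for m
  have rec: "X m = (fst (X (m+1)), r m * fst (X (m+1)) + snd (X (m+1)))" for m
  proof -
    have "X m = ev (StepB q r m (Bb.c (m+1))) 1" unfolding X_def using Bb.c_fix by metis
    also have "\<dots> = (fst (X (m+1)), r m * fst (X (m+1)) + snd (X (m+1)))"
      by (subst ev_StepB[OF AS_cB]) (auto simp: X_def)
    finally show ?thesis .
  qed
  have l1: "((\<lambda>m. fst (X m)) \<longlongrightarrow> 1) at_top"
    using cB_lim[of 1] unfolding X_def by auto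
  have f1: "fst (X m) = 1" for m
    by (rule const_lim[OF _ l1]) (subst rec, simp)
  show "fst (ev (Bb.c n) 1) = 1" using f1 unfolding X_def by simp
  show "snd (ev (Bb.c n) 1) = r n + snd (ev (Bb.c (n+1)) 1)"
    using rec[of n] f1[of "n+1"] unfolding X_def by (simp add: prod_eq_iff)
qed

lemma cA0: "A.c n 0 = (- q n * snd (A.c (n+1) 0), (1 - q n * r n) * snd (A.c (n+1) 0))"
proof -
  have "A.c n 0 = StepA q r n (A.c (n+1)) 0" using A.c_fix by metis
  then show ?thesis by (simp add: StepA_def sh_def algebra_simps)
qed

lemma cB0: "Bb.c n 0 = (fst (Bb.c (n+1) 0) + q n * snd (Bb.c (n+1) 0), r n * (fst (Bb.c (n+1) 0) + q n * snd (Bb.c (n+1) 0)))"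
proof -
  have "Bb.c n 0 = StepB q r n (Bb.c (n+1)) 0" using Bb.c_fix by metis
  then show ?thesis by (simp add: StepB_def sh_def algebra_simps)
qed

lemma cB0_snd: "snd (Bb.c n 0) = r n * fst (Bb.c n 0)"
  by (subst (1 2) cB0) simp

lemma cB0_rec: "fst (Bb.c n 0) = (1 + q n * r (n+1)) * fst (Bb.c (n+1) 0)"
  by (subst cB0) (simp add: cB0_snd algebra_simps)

lemma cA0_lim: "((\<lambda>m. snd (A.c m 0)) \<longlongrightarrow> 1) at_top"
proof -
  have "((\<lambda>m. snd (A.c m 0) - 1) \<longlongrightarrow> 0) at_top"
  proof (rule Lim_null_comparison[OF always_eventually close_lim], rule allI)
    fix m
    have "cmod (snd (A.c m 0) - 1) \<le> nrm (A.c m 0 - e2s 0)" by (simp add: nrm_def e2s_def)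
    also have "\<dots> \<le> LK 1 (\<lambda>k. A.c m k - e2s k)" using nrm_le_LK[of 0 1 "\<lambda>k. A.c m k - e2s k"] by simp
    also have "\<dots> \<le> exp (2*EE) * A.tl m 0" by (rule A.c_u)
    also have "\<dots> \<le> exp (2*EE) * (EE * (1 - tt m))" by (intro mult_left_mono A_tl) auto
    finally show "norm (snd (A.c m 0) - 1) \<le> exp (2*EE) * (EE * (1 - tt m))" .
  qed
  then show ?thesis by (simp add: LIM_zero_iff)
qed

lemma cB0_lim: "((\<lambda>m. fst (Bb.c m 0)) \<longlongrightarrow> 1) at_top"
proof -
  have "((\<lambda>m. fst (Bb.c m 0) - 1) \<longlongrightarrow> 0) at_top"
  proof (rule Lim_null_comparison[OF always_eventually close_lim], rule allI)
    fix m
    have "cmod (fst (Bb.c m 0) - 1) \<le> nrm (Bb.c m 0 - e1s 0)" by (simp add: nrm_def e1s_def)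
    also have "\<dots> \<le> LK 1 (\<lambda>k. Bb.c m k - e1s k)" using nrm_le_LK[of 0 1 "\<lambda>k. Bb.c m k - e1s k"] by simp
    also have "\<dots> \<le> exp (2*EE) * Bb.tl m 0" by (rule Bb.c_u)
    also have "\<dots> \<le> exp (2*EE) * (EE * (1 - tt m))" by (intro mult_left_mono Bb_tl) auto
    finally show "norm (fst (Bb.c m 0) - 1) \<le> exp (2*EE) * (EE * (1 - tt m))" .
  qed
  then show ?thesis by (simp add: LIM_zero_iff)
qed

lemma cA0_nz: "(\<And>m. 1 - q m * r m \<noteq> 0) \<Longrightarrow> snd (A.c n 0) \<noteq> 0"
  by (rule nonzero_lim[OF cA0_lim, of "\<lambda>m. 1 - q m * r m"]) (subst cA0, simp)+

lemma cB0_nz: "(\<And>m. 1 + q m * r (m + 1) \<noteq> 0) \<Longrightarrow> fst (Bb.c n 0) \<noteq> 0"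
  by (rule nonzero_lim[OF cB0_lim, of "\<lambda>m. 1 + q m * r (m + 1)"]) (rule cB0_rec, simp)

lemma sumsA:
  assumes h: "\<And>z. cmod z = 1 \<Longrightarrow> solves_Q q r z (\<lambda>n. \<psi> n z) \<and> jost_psi_asym z (\<lambda>n. \<psi> n z)"
  shows "(\<lambda>j. fst (Kker \<psi> n (n + int j))) sums 0" "(\<lambda>j. snd (Kker \<psi> n (n + int j))) sums 1"
proof -
  have f: "(\<lambda>k. fst (A.c n k)) sums 0"
    using summable_sums[OF AS_fst[OF AS_cA[of n], of 1]] evA1[of n] by (simp add: ev_def)
  have s: "(\<lambda>k. snd (A.c n k)) sums 1"
    using summable_sums[OF AS_snd[OF AS_cA[of n], of 1]] evA1[of n] by (simp add: ev_def)
  show "(\<lambda>j. fst (Kker \<psi> n (n + int j))) sums 0"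
  proof -
    have "(\<lambda>j. fst (Kker \<psi> n (n + int j))) = (\<lambda>j. if even j then fst (A.c n (j div 2)) else 0)"
      by (auto simp: K_formula[OF h] fun_eq_iff zero_prod_def)
    then show ?thesis using sums_interleave[OF f] by simp
  qed
  show "(\<lambda>j. snd (Kker \<psi> n (n + int j))) sums 1"
  proof -
    have "(\<lambda>j. snd (Kker \<psi> n (n + int j))) = (\<lambda>j. if even j then snd (A.c n (j div 2)) else 0)"
      by (auto simp: K_formula[OF h] fun_eq_iff zero_prod_def)
    then show ?thesis using sums_interleave[OF s] by simp
  qed
qed

lemma sumsB:
  assumes h: "\<And>z. cmod z = 1 \<Longrightarrow> solves_Q q r z (\<lambda>n. \<psi>b n z) \<and> jost_psibar_asym z (\<lambda>n. \<psi>b n z)"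
  shows "(\<lambda>j. fst (Kbker \<psi>b n (n + int j))) sums 1" "(\<lambda>j. snd (Kbker \<psi>b n (n + int j))) sums snd (ev (Bb.c n) 1)"
proof -
  have f: "(\<lambda>k. fst (Bb.c n k)) sums 1"
    using summable_sums[OF AS_fst[OF AS_cB[of n], of 1]] evB1(1)[of n] by (simp add: ev_def)
  have s: "(\<lambda>k. snd (Bb.c n k)) sums snd (ev (Bb.c n) 1)"
    using summable_sums[OF AS_snd[OF AS_cB[of n], of 1]] by (simp add: ev_def)
  show "(\<lambda>j. fst (Kbker \<psi>b n (n + int j))) sums 1"
  proof -
    have "(\<lambda>j. fst (Kbker \<psi>b n (n + int j))) = (\<lambda>j. if even j then fst (Bb.c n (j div 2)) else 0)"
      by (auto simp: Kb_formula[OF h] fun_eq_iff zero_prod_def)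
    then show ?thesis using sums_interleave[OF f] by simp
  qed
  show "(\<lambda>j. snd (Kbker \<psi>b n (n + int j))) sums snd (ev (Bb.c n) 1)"
  proof -
    have "(\<lambda>j. snd (Kbker \<psi>b n (n + int j))) = (\<lambda>j. if even j then snd (Bb.c n (j div 2)) else 0)"
      by (auto simp: Kb_formula[OF h] fun_eq_iff zero_prod_def)
    then show ?thesis using sums_interleave[OF s] by simp
  qed
qed

lemma tails:
  assumes h: "\<And>z. cmod z = 1 \<Longrightarrow> solves_Q q r z (\<lambda>n. \<psi> n z) \<and> jost_psi_asym z (\<lambda>n. \<psi> n z)"
    and hb: "\<And>z. cmod z = 1 \<Longrightarrow> solves_Q q r z (\<lambda>n. \<psi>b n z) \<and> jost_psibar_asym z (\<lambda>n. \<psi>b n z)"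
  shows "tailsum (\<lambda>l. fst (Mker \<psi> \<psi>b n l)) n = fst (solve2 (Bb.c n 0) (A.c n 0) (0, 1))"
    "tailsum (\<lambda>l. snd (Mker \<psi> \<psi>b n l)) n = snd (solve2 (Bb.c n 0) (A.c n 0) (0, 1))"
    "tailsum (\<lambda>l. fst (Mbker \<psi> \<psi>b n l)) n = fst (solve2 (Bb.c n 0) (A.c n 0) (1, snd (ev (Bb.c n) 1)))"
    "tailsum (\<lambda>l. snd (Mbker \<psi> \<psi>b n l)) n = snd (solve2 (Bb.c n 0) (A.c n 0) (1, snd (ev (Bb.c n) 1)))"
proof -
  have Kn: "Kker \<psi> n n = A.c n 0" using K_formula[OF h, of n 0] by simp
  have Kbn: "Kbker \<psi>b n n = Bb.c n 0" using Kb_formula[OF hb, of n 0] by simp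
  show "tailsum (\<lambda>l. fst (Mker \<psi> \<psi>b n l)) n = fst (solve2 (Bb.c n 0) (A.c n 0) (0, 1))"
    unfolding tailsum_def Mker_def Kn Kbn by (rule sums_unique[OF solve2_sums(1)[OF sumsA[OF h]], symmetric])
  show "tailsum (\<lambda>l. snd (Mker \<psi> \<psi>b n l)) n = snd (solve2 (Bb.c n 0) (A.c n 0) (0, 1))"
    unfolding tailsum_def Mker_def Kn Kbn by (rule sums_unique[OF solve2_sums(2)[OF sumsA[OF h]], symmetric])
  show "tailsum (\<lambda>l. fst (Mbker \<psi> \<psi>b n l)) n = fst (solve2 (Bb.c n 0) (A.c n 0) (1, snd (ev (Bb.c n) 1)))"
    unfolding tailsum_def Mbker_def Kn Kbn by (rule sums_unique[OF solve2_sums(1)[OF sumsB[OF hb]], symmetric])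
  show "tailsum (\<lambda>l. snd (Mbker \<psi> \<psi>b n l)) n = snd (solve2 (Bb.c n 0) (A.c n 0) (1, snd (ev (Bb.c n) 1)))"
    unfolding tailsum_def Mbker_def Kn Kbn by (rule sums_unique[OF solve2_sums(2)[OF sumsB[OF hb]], symmetric])
qed

end


theorem theorem6p3:
  fixes q r :: "int \<Rightarrow> complex"
    and \<psi> \<psi>b :: "int \<Rightarrow> complex \<Rightarrow> complex \<times> complex"
  assumes "rapidly_decreasing q" and "rapidly_decreasing r"
    and "\<And>n. 1 - q n * r n \<noteq> 0"
    and "\<And>n. 1 + q n * r (n + 1) \<noteq> 0"
    and "\<And>z. cmod z = 1 \<Longrightarrow> solves_Q q r z (\<lambda>n. \<psi> n z) \<and> jost_psi_asym z (\<lambda>n. \<psi> n z)"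
    and "\<And>z. cmod z = 1 \<Longrightarrow> solves_Q q r z (\<lambda>n. \<psi>b n z) \<and> jost_psibar_asym z (\<lambda>n. \<psi>b n z)"
  shows "(q n =
      (tailsum (\<lambda>l. fst (Mker \<psi> \<psi>b n l)) n * tailsum (\<lambda>k. snd (Mker \<psi> \<psi>b n k)) n) /
      (tailsum (\<lambda>l. fst (Mbker \<psi> \<psi>b n l)) n * tailsum (\<lambda>k. snd (Mker \<psi> \<psi>b n k)) n
       - tailsum (\<lambda>l. fst (Mker \<psi> \<psi>b n l)) n * tailsum (\<lambda>k. snd (Mbker \<psi> \<psi>b n k)) n)) \<and>
    (r n =
      tailsum (\<lambda>l. snd (Mbker \<psi> \<psi>b (n - 1) l)) (n - 1) / tailsum (\<lambda>l. snd (Mker \<psi> \<psi>b (n - 1) l)) (n - 1)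
      - tailsum (\<lambda>l. snd (Mbker \<psi> \<psi>b n l)) n / tailsum (\<lambda>l. snd (Mker \<psi> \<psi>b n l)) n)"
proof -
  interpret pot q r by unfold_locales (rule assms(1), rule assms(2))
  have form: "Bb.c m 0 = (fst (Bb.c m 0), r m * fst (Bb.c m 0))"
    "A.c m 0 = (- q m * snd (A.c (m+1) 0), (1 - q m * r m) * snd (A.c (m+1) 0))" for m
    using cB0_snd[of m] cA0[of m] by (simp_all add: prod_eq_iff)
  have nzC: "fst (Bb.c m 0) \<noteq> 0" for m using cB0_nz assms(4) by blast
  have nzb: "snd (A.c (m+1) 0) \<noteq> 0" for m using cA0_nz assms(3) by blast
  define R where "R m = snd (ev (Bb.c m) 1)" for m
  have Rr: "snd (solve2 (Bb.c m 0) (A.c m 0) (1, R m)) / snd (solve2 (Bb.c m 0) (A.c m 0) (0, 1)) = R m - r m"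
    and Q: "q m = fst (solve2 (Bb.c m 0) (A.c m 0) (0, 1)) * snd (solve2 (Bb.c m 0) (A.c m 0) (0, 1)) /
      (fst (solve2 (Bb.c m 0) (A.c m 0) (1, R m)) * snd (solve2 (Bb.c m 0) (A.c m 0) (0, 1)) -
       fst (solve2 (Bb.c m 0) (A.c m 0) (0, 1)) * snd (solve2 (Bb.c m 0) (A.c m 0) (1, R m)))" for m
  proof -
    obtain C where C: "C = fst (Bb.c m 0)" by blast
    obtain b where b: "b = snd (A.c (m+1) 0)" by blast
    have fB: "Bb.c m 0 = (C, r m * C)" using form(1)[of m] C by simp
    have fA: "A.c m 0 = (- q m * b, (1 - q m * r m) * b)" using form(2)[of m] b by simp
    have nC: "C \<noteq> 0" using nzC C by simp
    have nb: "b \<noteq> 0" using nzb b by simp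
    show "snd (solve2 (Bb.c m 0) (A.c m 0) (1, R m)) / snd (solve2 (Bb.c m 0) (A.c m 0) (0, 1)) = R m - r m"
      unfolding fA fB by (rule final_alg(2)[OF nC nb])
    show "q m = fst (solve2 (Bb.c m 0) (A.c m 0) (0, 1)) * snd (solve2 (Bb.c m 0) (A.c m 0) (0, 1)) /
      (fst (solve2 (Bb.c m 0) (A.c m 0) (1, R m)) * snd (solve2 (Bb.c m 0) (A.c m 0) (0, 1)) -
       fst (solve2 (Bb.c m 0) (A.c m 0) (0, 1)) * snd (solve2 (Bb.c m 0) (A.c m 0) (1, R m)))"
      unfolding fA fB by (rule final_alg(1)[OF nC nb])
  qed
  have Rrec: "R (n - 1) = r (n - 1) + R n" unfolding R_def using evB1(2)[of "n - 1"] by simp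
  have T1: "tailsum (\<lambda>l. fst (Mker \<psi> \<psi>b m l)) m = fst (solve2 (Bb.c m 0) (A.c m 0) (0, 1))" for m
    unfolding R_def by (rule tails(1)[OF assms(5) assms(6)])
  have T2: "tailsum (\<lambda>l. snd (Mker \<psi> \<psi>b m l)) m = snd (solve2 (Bb.c m 0) (A.c m 0) (0, 1))" for m
    unfolding R_def by (rule tails(2)[OF assms(5) assms(6)])
  have T3: "tailsum (\<lambda>l. fst (Mbker \<psi> \<psi>b m l)) m = fst (solve2 (Bb.c m 0) (A.c m 0) (1, R m))" for m
    unfolding R_def by (rule tails(3)[OF assms(5) assms(6)])
  have T4: "tailsum (\<lambda>l. snd (Mbker \<psi> \<psi>b m l)) m = snd (solve2 (Bb.c m 0) (A.c m 0) (1, R m))" for m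
    unfolding R_def by (rule tails(4)[OF assms(5) assms(6)])
  have "r n = (R (n - 1) - r (n - 1)) - (R n - r n)" using Rrec by simp
  then show ?thesis
    unfolding T1 T2 T3 T4 using Q[of n] Rr[of "n - 1"] Rr[of n] by simp
qed


end
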